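(* Let $G$ be a finite group. Then every subgroup of $G$ (including $G$ itself) is $\psi$-divisible if and only if $G$ is cyclic of square-free order.
   Context: For a finite group $G$, $\psi(G)=\sum_{x\in G} o(x)$ denotes the sum of the orders of all elements of $G$. A finite group $G$ is called $\psi$-divisible if $\psi(H)$ divides $\psi(G)$ for every subgroup $H$ of $G$. *)

theory Defs
  imports "HOL-Algebra.Algebra" "HOL-Computational_Algebra.Squarefree"
begin

definition psi :: "('a, 'b) monoid_scheme \<Rightarrow> nat" where
  "psi G = (\<Sum>x\<in>carrier G. group.ord G x)"

definition psi_divisible :: "('a, 'b) monoid_scheme \<Rightarrow> bool" where
  "psi_divisible G \<longleftrightarrow> (\<forall>H. subgroup H G \<longrightarrow> psi (G\<lparr>carrier := H\<rparr>) dvd psi G)"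

end

theory Submission imports Defs begin

lemma pow_sub: "(x [^]\<^bsub>G\<lparr>carrier := H\<rparr>\<^esub> (n::nat)) = x [^]\<^bsub>G\<^esub> n"
  by (simp add: nat_pow_def)


lemma nt1:
  fixes p :: nat assumes "2 \<le> p"
  shows "\<not> (1 + (p - 1) * p) dvd (1 + (p - 1) * p + (p * p - p) * (p * p))"
proof
  from assms obtain k where k: "p = Suc k" by (cases p) auto
  have k1: "1 \<le> k" using assms k by simp
  define A where "A = 1 + k * (k + 1)"
  define K where "K = k * (k + 1) * ((k + 1) * (k + 1))"
  define S where "S = (k + 1) * (k + 1)"
  have eA: "1 + (p - 1) * p = A" using k A_def by simp
  have eK: "(p * p - p) * (p * p) = K" using k K_def by (simp add: algebra_simps)
  assume "(1 + (p - 1) * p) dvd (1 + (p - 1) * p + (p * p - p) * (p * p))"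
  then have d: "A dvd A + K" unfolding eA eK .
  have e: "A + K + S = A * (1 + S)" unfolding A_def K_def S_def by (simp add: algebra_simps)
  have "A dvd A + K + S" unfolding e by simp
  then have "A dvd S" using iffD1[OF dvd_add_right_iff[OF d, of S]] by blast
  moreover have "S = A + k" unfolding A_def S_def by (simp add: algebra_simps)
  ultimately have "A dvd A + k" by simp
  then have "A dvd k" using iffD1[OF dvd_add_right_iff[OF dvd_refl[of A], of k]] by blast
  then have "A \<le> k" using k1 by (simp add: dvd_imp_le)
  moreover have "k * 1 \<le> k * (k + 1)" by (rule mult_le_mono2) simp
  then have "k < A" unfolding A_def by simp
  ultimately show False by simp
qed

lemma nt2:
  fixes p :: nat assumes "2 \<le> p"
  shows "\<not> (1 + (p - 1) * p) dvd (1 + (p * p - 1) * p)"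
proof
  from assms obtain k where k: "p = Suc k" by (cases p) auto
  have k1: "1 \<le> k" using assms k by simp
  define A where "A = 1 + k * (k + 1)"
  have eA: "1 + (p - 1) * p = A" using k A_def by simp
  have eY: "1 + (p * p - 1) * p = (k + 1) * A + k * k"
    using k A_def by (simp add: algebra_simps)
  assume "(1 + (p - 1) * p) dvd (1 + (p * p - 1) * p)"
  then have d: "A dvd (k + 1) * A + k * k" unfolding eA eY .
  have "A dvd (k + 1) * A" by simp
  then have "A dvd k * k" using iffD1[OF dvd_add_right_iff[of A "(k + 1) * A" "k * k"]] d by blast
  then have "A \<le> k * k" using k1 by (simp add: dvd_imp_le)
  moreover have "k * k < A" unfolding A_def by (simp add: algebra_simps)
  ultimately show False by simp
qed

lemma nt3:
  fixes p q :: nat assumes p: "2 \<le> p" and q: "2 \<le> q"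
    and d1: "(1 + (p - 1) * p) dvd (1 + (p - 1) * p + (p * q - p) * q)"
    and d2: "(1 + (q - 1) * q) dvd (1 + (p - 1) * p + (p * q - p) * q)"
  shows False
proof -
  from p obtain k where k: "p = Suc k" by (cases p) auto
  have k1: "1 \<le> k" using p k by simp
  from q obtain l where l: "q = Suc l" by (cases q) auto
  have l1: "1 \<le> l" using q l by simp
  define A where "A = 1 + k * (k + 1)"
  define B where "B = 1 + l * (l + 1)"
  define M where "M = (k + 1) * (l * (l + 1))"
  have eA: "1 + (p - 1) * p = A" using k A_def by simp
  have eB: "1 + (q - 1) * q = B" using l B_def by simp
  have eM: "(p * q - p) * q = M"
    using k l M_def by (simp add: algebra_simps)
  have eX2: "A + M = k * k + (k + 1) * B"
    using A_def M_def B_def by (simp add: algebra_simps)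
  have "A dvd A + M" using d1 unfolding eA eM .
  then have a1: "A dvd M" using iffD1[OF dvd_add_right_iff[OF dvd_refl[of A], of M]] by blast
  have "gcd (k + 1) (k * (k + 1) + 1) = gcd (k + 1) 1" by (rule gcd_add_mult)
  then have "gcd (k + 1) (k * (k + 1) + 1) = 1" by simp
  then have "coprime A (k + 1)" unfolding A_def by (simp add: coprime_iff_gcd_eq_1 gcd.commute add.commute)
  then have "A dvd l * (l + 1)" using a1 unfolding M_def using coprime_dvd_mult_right_iff by blast
  then have "A \<le> l * (l + 1)" using l1 by (simp add: dvd_imp_le)
  then have lt: "k * (k + 1) < l * (l + 1)" using A_def by simp
  have kl: "k < l"
  proof (rule ccontr)
    assume "\<not> k < l" then have "l \<le> k" by simp
    then have "l * (l + 1) \<le> k * (k + 1)" using mult_le_mono[of l k "l+1" "k+1"] by simp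
    then show False using lt by simp
  qed
  have "B dvd A + M" using d2 unfolding eA eM eB .
  then have "B dvd k * k + (k + 1) * B" unfolding eX2 .
  moreover have "B dvd (k + 1) * B" by simp
  ultimately have "B dvd k * k" using dvd_add_left_iff by blast
  then have "B \<le> k * k" using k1 by (simp add: dvd_imp_le)
  then have "l * (l + 1) < k * k" using B_def by simp
  moreover have "k * k \<le> l * (l + 1)" using mult_le_mono[of k l k "l+1"] kl by simp
  ultimately show False by simp
qed

lemma dvd_p2:
  fixes p d :: nat
  assumes "Factorial_Ring.prime p" "d dvd p ^ 2"
  shows "d = 1 \<or> d = p \<or> d = p ^ 2"
proof -
  obtain i where i: "i \<le> 2" "d = p ^ i" using divides_primepow_nat[OF assms(1)] assms(2) by blast
  then have "i = 0 \<or> i = 1 \<or> i = 2" by auto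
  then show ?thesis using i by auto
qed

lemma card_fibers:
  assumes fin: "finite A" and fib: "\<And>b. b \<in> f ` A \<Longrightarrow> card {a \<in> A. f a = b} = k"
  shows "card A = k * card (f ` A)"
proof -
  have A: "A = (\<Union>b\<in>f ` A. {a \<in> A. f a = b})" by blast
  have "card A = card (\<Union>b\<in>f ` A. {a \<in> A. f a = b})" using A by simp
  also have "\<dots> = (\<Sum>b\<in>f ` A. card {a \<in> A. f a = b})"
    by (rule card_UN_disjoint) (use fin in auto)
  also have "\<dots> = (\<Sum>b\<in>f ` A. k)" using fib by simp
  finally show ?thesis by simp
qed

definition cj :: "('a, 'b) monoid_scheme \<Rightarrow> 'a \<Rightarrow> 'a \<Rightarrow> 'a" where
  "cj G k a = k \<otimes>\<^bsub>G\<^esub> a \<otimes>\<^bsub>G\<^esub> inv\<^bsub>G\<^esub> k"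

context group begin

lemma ord_sub: assumes "subgroup H G" shows "group.ord (G\<lparr>carrier := H\<rparr>) x = ord x"
proof -
  have "group (G\<lparr>carrier := H\<rparr>)" using assms subgroup_imp_group by blast
  then show ?thesis by (simp add: group.ord_def ord_def pow_sub is_group)
qed

lemma psi_sub: assumes "subgroup H G" shows "psi (G\<lparr>carrier := H\<rparr>) = (\<Sum>x\<in>H. ord x)"
  using ord_sub[OF assms] by (simp add: psi_def)

lemma psi_self: "psi G = (\<Sum>x\<in>carrier G. ord x)"
  by (simp add: psi_def)

lemma ord_dvd_sub: assumes "subgroup H G" "x \<in> H" shows "ord x dvd card H"
proof -
  interpret H: group "G\<lparr>carrier := H\<rparr>" using assms subgroup_imp_group by blast
  have "H.ord x dvd order (G\<lparr>carrier := H\<rparr>)" using assms by (intro H.ord_dvd_group_order) simp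
  then show ?thesis using ord_sub[OF assms(1)] by (simp add: order_def)
qed

lemma card_sub_dvd: assumes "finite (carrier G)" "subgroup H G" shows "card H dvd order G"
proof -
  have e: "order G = card H * card (rcosets H)" using lagrange[OF assms(2)] by (simp add: mult.commute)
  show ?thesis unfolding e by (rule dvd_triv_left)
qed

lemma card_sub_sub_dvd: assumes "subgroup H G" "subgroup K G" "K \<subseteq> H" shows "card K dvd card H"
proof -
  interpret H: group "G\<lparr>carrier := H\<rparr>" using assms subgroup_imp_group by blast
  have "subgroup K (G\<lparr>carrier := H\<rparr>)" using assms subgroup_incl by blast
  from H.lagrange[OF this] have e: "card H = card K * card (rcosets\<^bsub>G\<lparr>carrier := H\<rparr>\<^esub> K)" by (simp add: order_def mult.commute)
  show ?thesis unfolding e by (rule dvd_triv_left)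
qed

lemma pow_ord_sub: assumes "subgroup H G" "x \<in> H" shows "x [^] card H = \<one>"
proof -
  have "x \<in> carrier G" using subgroup.mem_carrier[OF assms] .
  then show ?thesis using ord_dvd_sub[OF assms] pow_eq_id by simp
qed


lemma one_in_sub: "subgroup H G \<Longrightarrow> \<one> \<in> H"
  using subgroup.one_closed by blast

lemma sum_ord_const:
  assumes "finite S" "\<one> \<in> S" "\<forall>x\<in>S - {\<one>}. ord x = m"
  shows "(\<Sum>x\<in>S. ord x) = 1 + (card S - 1) * m"
proof -
  have "(\<Sum>x\<in>S. ord x) = ord \<one> + (\<Sum>x\<in>S - {\<one>}. ord x)"
    by (rule sum.remove[OF assms(1,2)])
  also have "(\<Sum>x\<in>S - {\<one>}. ord x) = (\<Sum>x\<in>S - {\<one>}. m)"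
    by (rule sum.cong) (use assms(3) in auto)
  also have "\<dots> = (card S - 1) * m" using assms by (simp add: card_Diff_singleton)
  finally show ?thesis by simp
qed

lemma prime_sub_ord:
  assumes "subgroup K G" "Factorial_Ring.prime (card K)" "x \<in> K" "x \<noteq> \<one>"
  shows "ord x = card K"
proof -
  have xc: "x \<in> carrier G" using subgroup.mem_carrier[OF assms(1,3)] .
  have d: "ord x dvd card K" using ord_dvd_sub[OF assms(1,3)] .
  have n1: "ord x \<noteq> 1" using ord_eq_1[OF xc] assms(4) by simp
  have "\<forall>m. m dvd card K \<longrightarrow> m = 1 \<or> m = card K" using assms(2) unfolding prime_nat_iff by blast
  then show ?thesis using d n1 by blast
qed

lemma psi_prime_sub:
  assumes "subgroup K G" "Factorial_Ring.prime (card K)"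
  shows "(\<Sum>x\<in>K. ord x) = 1 + (card K - 1) * card K"
proof (rule sum_ord_const)
  show "finite K"
  proof (rule ccontr)
    assume "infinite K" then have "card K = 0" by simp
    then show False using assms(2) by simp
  qed
  show "\<one> \<in> K" using assms one_in_sub by blast
  show "\<forall>x\<in>K - {\<one>}. ord x = card K" using prime_sub_ord[OF assms] by blast
qed

lemma ord_pos: assumes "finite (carrier G)" "x \<in> carrier G" shows "0 < ord x"
  using ord_ge_1[OF assms] by simp

lemma gen_image:
  assumes fin: "finite (carrier G)" and K: "subgroup K G" and g: "g \<in> K" and o: "ord g = card K"
  shows "K = (\<lambda>i. g [^] i) ` {..<card K}" and "inj_on (\<lambda>i. g [^] i) {..<card K}"
proof -
  have gc: "g \<in> carrier G" using subgroup.mem_carrier[OF K g] .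
  have op: "0 < ord g" using ord_pos[OF fin gc] .
  have e: "{..<card K} = {0..ord g - 1}" using op o by auto
  have gen: "generate G {g} = (\<lambda>i. g [^] i) ` {0..ord g - 1}"
    using generate_pow_nat[OF gc] ord_elems_inf_carrier[OF gc] op by auto
  have "generate G {g} \<subseteq> K" using generate_subgroup_incl[OF _ K] g by blast
  moreover have "card (generate G {g}) = card K" using generate_pow_card[OF gc] o by simp
  moreover have "finite K" using fin K subgroup.subset finite_subset by blast
  ultimately have "generate G {g} = K" by (simp add: card_subset_eq)
  then show "K = (\<lambda>i. g [^] i) ` {..<card K}" using gen e by simp
  show "inj_on (\<lambda>i. g [^] i) {..<card K}" using ord_inj[OF gc] e by simp
qed

lemma gen_comm:
  assumes fin: "finite (carrier G)" and K: "subgroup K G" and g: "g \<in> K" and o: "ord g = card K"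
    and a: "a \<in> K" and b: "b \<in> K"
  shows "a \<otimes> b = b \<otimes> a"
proof -
  have gc: "g \<in> carrier G" using subgroup.mem_carrier[OF K g] .
  obtain i j where "a = g [^] (i::nat)" "b = g [^] (j::nat)"
    using gen_image(1)[OF assms(1-4)] a b by blast
  then show ?thesis using gc by (simp add: nat_pow_mult add.commute)
qed

lemma ord_mult_coprime:
  assumes x: "x \<in> carrier G" and y: "y \<in> carrier G" and c: "x \<otimes> y = y \<otimes> x"
    and cp: "coprime (ord x) (ord y)"
  shows "ord (x \<otimes> y) = ord x * ord y"
proof -
  define m where "m = ord (x \<otimes> y)"
  have xy: "x \<otimes> y \<in> carrier G" using x y by simp
  have a1: "x [^] (ord x * ord y) = \<one>" using x by (simp add: nat_pow_pow[symmetric])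
  have "y [^] (ord x * ord y) = (y [^] ord y) [^] ord x" using nat_pow_pow[OF y, of "ord y" "ord x"] by (simp only: mult.commute)
  also have "\<dots> = \<one>" using y by simp
  finally have a2: "y [^] (ord x * ord y) = \<one>" .
  have "(x \<otimes> y) [^] (ord x * ord y) = \<one>"
    using pow_mult_distrib[OF c x y] a1 a2 by simp
  then have d1: "m dvd ord x * ord y" using pow_eq_id[OF xy] m_def by simp
  have m1: "x [^] m \<otimes> y [^] m = \<one>" using pow_mult_distrib[OF c x y] pow_ord_eq_1[OF xy] m_def by simp
  have xm: "x [^] m \<in> carrier G" and ym: "y [^] m \<in> carrier G" using x y by auto
  have cm: "x [^] m \<otimes> y [^] m = y [^] m \<otimes> x [^] m"
    using x y c by (metis group_commutes_pow nat_pow_closed)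
  have b1: "y [^] (m * ord y) = \<one>"
  proof -
    have "y [^] (m * ord y) = (y [^] ord y) [^] m" using nat_pow_pow[OF y, of "ord y" m] by (simp only: mult.commute)
    also have "\<dots> = \<one>" using y by simp
    finally show ?thesis .
  qed
  have b2: "x [^] (m * ord x) = \<one>"
  proof -
    have "x [^] (m * ord x) = (x [^] ord x) [^] m" using nat_pow_pow[OF x, of "ord x" m] by (simp only: mult.commute)
    also have "\<dots> = \<one>" using x by simp
    finally show ?thesis .
  qed
  have "(x [^] m) [^] ord y \<otimes> (y [^] m) [^] ord y = \<one>"
    using pow_mult_distrib[OF cm xm ym, of "ord y"] m1 by simp
  then have "x [^] (m * ord y) = \<one>" using b1 x y by (simp add: nat_pow_pow)
  then have "ord x dvd m * ord y" using pow_eq_id[OF x] by simp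
  then have dx: "ord x dvd m" using cp by (simp add: coprime_dvd_mult_left_iff)
  have "(y [^] m) [^] ord x \<otimes> (x [^] m) [^] ord x = \<one>"
    using pow_mult_distrib[OF cm[symmetric] ym xm, of "ord x"] m1 cm by simp
  then have "y [^] (m * ord x) = \<one>" using b2 x y by (simp add: nat_pow_pow)
  then have "ord y dvd m * ord x" using pow_eq_id[OF y] by simp
  then have dy: "ord y dvd m" using cp by (simp add: coprime_dvd_mult_left_iff coprime_commute)
  have "ord x * ord y dvd m" using dx dy cp by (simp add: divides_mult)
  then show ?thesis using d1 m_def by (simp add: dvd_antisym)
qed


lemma cyclic_iff_gen:
  assumes fin: "finite (carrier G)"
  shows "cyclic_group G \<longleftrightarrow> (\<exists>g\<in>carrier G. ord g = order G)"
proof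
  assume "cyclic_group G"
  then obtain x where x: "x \<in> carrier G" "subgroup_generated G {x} = G" unfolding cyclic_group_def by blast
  then have "carrier (subgroup_generated G {x}) = carrier G" by simp
  then have "generate G {x} = carrier G" using x(1) by (simp add: carrier_subgroup_generated)
  then have "ord x = order G" using generate_pow_card[OF x(1)] by (simp add: order_def)
  then show "\<exists>g\<in>carrier G. ord g = order G" using x(1) by blast
next
  assume "\<exists>g\<in>carrier G. ord g = order G"
  then obtain g where g: "g \<in> carrier G" "ord g = order G" by blast
  have "generate G {g} \<subseteq> carrier G" using generate_incl g(1) by blast
  moreover have "card (generate G {g}) = card (carrier G)" using generate_pow_card[OF g(1)] g(2) by (simp add: order_def)
  ultimately have "generate G {g} = carrier G" using fin by (simp add: card_subset_eq)
  then have "subgroup_generated G {g} = G" using g(1) by (simp add: subgroup_generated_def)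
  then show "cyclic_group G" using g(1) unfolding cyclic_group_def by blast
qed

lemma nat_mult_set_lemma:
  fixes d e :: nat
  assumes "0 < d" "0 < e"
  shows "{i. i < d * e \<and> d * e dvd i * d} = (\<lambda>j. j * e) ` {..<d}"
proof (intro Set.set_eqI iffI)
  fix i assume "i \<in> {i. i < d * e \<and> d * e dvd i * d}"
  then have i: "i < d * e" "d * e dvd i * d" by auto
  have "d * e dvd d * i" using i(2) by (simp add: mult.commute)
  then have "e dvd i" using assms(1) by simp
  then obtain j where "i = e * j" by (rule dvdE)
  then have j: "i = j * e" by (simp add: mult.commute)
  then have "j < d" using i(1) assms by simp
  then show "i \<in> (\<lambda>j. j * e) ` {..<d}" using j by blast
next
  fix i assume "i \<in> (\<lambda>j. j * e) ` {..<d}"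
  then obtain j where j: "j < d" "i = j * e" by blast
  have "i < d * e" using j assms by (simp add: mult.commute)
  moreover have "d * e dvd i * d" using j by (simp add: mult.commute mult.left_commute)
  ultimately show "i \<in> {i. i < d * e \<and> d * e dvd i * d}" by simp
qed

lemma card_roots:
  assumes fin: "finite (carrier G)" and g: "g \<in> carrier G" "ord g = order G" and d: "d dvd order G"
  shows "card {y \<in> carrier G. y [^] d = \<one>} = d"
proof -
  define n where "n = order G"
  have sg: "subgroup (carrier G) G" by (rule subgroup_self)
  have o: "ord g = card (carrier G)" using g(2) by (simp add: order_def)
  have img: "carrier G = (\<lambda>i. g [^] i) ` {..<n}" using gen_image(1)[OF fin sg g(1) o] n_def by (simp add: order_def)
  have inj: "inj_on (\<lambda>i. g [^] i) {..<n}" using gen_image(2)[OF fin sg g(1) o] n_def by (simp add: order_def)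
  have npos: "0 < n" using ord_pos[OF fin g(1)] g(2) n_def by simp
  have dpos: "0 < d" using d npos n_def by (metis dvd_0_left_iff neq0_conv)
  define e where "e = n div d"
  have ne: "n = d * e" using d n_def e_def by simp
  have epos: "0 < e" using ne npos by simp
  have "{y \<in> carrier G. y [^] d = \<one>} = (\<lambda>i. g [^] i) ` {i. i < n \<and> n dvd i * d}"
  proof -
    have "(g [^] (i::nat)) [^] d = \<one> \<longleftrightarrow> n dvd i * d" for i
    proof -
      have "(g [^] (i::nat)) [^] d = g [^] (i * d)" by (rule nat_pow_pow[OF g(1)])
      then show ?thesis using pow_eq_id[OF g(1), of "i*d"] g(2) n_def by simp
    qed
    then show ?thesis unfolding img by auto
  qed
  also have "{i. i < n \<and> n dvd i * d} = (\<lambda>j. j * e) ` {..<d}" using nat_mult_set_lemma[OF dpos epos] ne by simp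
  finally have eq: "{y \<in> carrier G. y [^] d = \<one>} = (\<lambda>i. g [^] i) ` ((\<lambda>j. j * e) ` {..<d})" .
  have sub: "(\<lambda>j. j * e) ` {..<d} \<subseteq> {..<n}" using ne epos by auto
  have inj2: "inj_on (\<lambda>j. j * e) {..<d}" using epos by (simp add: inj_on_def)
  have "card ((\<lambda>i. g [^] i) ` ((\<lambda>j. j * e) ` {..<d})) = card ((\<lambda>j. j * e) ` {..<d})"
    using card_image inj_on_subset[OF inj sub] by blast
  also have "\<dots> = d" using card_image[OF inj2] by simp
  finally show ?thesis using eq by simp
qed


lemma subgroup_of_sub:
  assumes H: "subgroup H G" and K: "subgroup K (G\<lparr>carrier := H\<rparr>)"
  shows "subgroup K G" and "K \<subseteq> H"
proof -
  show KH: "K \<subseteq> H" using subgroup.subset[OF K] by simp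
  show "subgroup K G"
  proof (rule subgroupI)
    show "K \<subseteq> carrier G" using KH subgroup.subset[OF H] by blast
    show "K \<noteq> {}" using subgroup.one_closed[OF K] by blast
    fix a b assume a: "a \<in> K" and b: "b \<in> K"
    have "inv\<^bsub>G\<lparr>carrier := H\<rparr>\<^esub> a \<in> K" using subgroup.m_inv_closed[OF K a] .
    then show "inv a \<in> K" using m_inv_consistent[OF H] a KH by auto
    show "a \<otimes> b \<in> K" using subgroup.m_closed[OF K a b] by simp
  qed
qed

lemma sqf_coprime:
  fixes a b :: nat
  assumes "squarefree (a * b)"
  shows "coprime a b"
proof (rule ccontr)
  assume "\<not> coprime a b"
  then have "gcd a b \<noteq> 1" by (simp add: coprime_iff_gcd_eq_1)
  then obtain p :: nat where p: "Factorial_Ring.prime p" "p dvd gcd a b" using prime_factor_nat by blast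
  then have "p * p dvd a * b" by (simp add: mult_dvd_mono)
  then have "p ^ 2 dvd a * b" by (simp add: power2_eq_square)
  then have "p dvd 1" using squarefreeD[OF assms] by blast
  then show False using p(1) by simp
qed

lemma pow_inj_coprime:
  fixes e e' :: nat
  assumes l: "l \<in> carrier G" and l': "l' \<in> carrier G" and "l [^] e' = \<one>" "l' [^] e' = \<one>"
    and cp: "coprime e e'" and e: "e \<noteq> 0" and eq: "l [^] e = l' [^] e"
  shows "l = l'"
proof -
  obtain x y where xy: "e * x = e' * y + gcd e e'" using bezout_nat[OF e] by blast
  then have xy1: "e * x = e' * y + 1" using cp by simp
  have r: "z [^] (e * x) = z" if z: "z \<in> carrier G" "z [^] e' = \<one>" for z
  proof -
    have "z [^] (e * x) = z [^] Suc (e' * y)" using xy1 by simp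
    also have "\<dots> = z [^] (e' * y) \<otimes> z" by (rule nat_pow_Suc)
    also have "z [^] (e' * y) = (z [^] e') [^] y" using nat_pow_pow[OF z(1), of e' y] by simp
    finally show ?thesis using z by simp
  qed
  have "l = l [^] (e * x)" using r assms by simp
  also have "\<dots> = (l [^] e) [^] x" using nat_pow_pow[OF l, of e x] by simp
  also have "\<dots> = (l' [^] e) [^] x" using eq by simp
  also have "\<dots> = l' [^] (e * x)" using nat_pow_pow[OF l', of e x] by simp
  also have "\<dots> = l'" using r assms by simp
  finally show ?thesis .
qed

lemma cyclic_sub_roots:
  assumes fin: "finite (carrier G)" and g: "g \<in> carrier G" "ord g = order G" and H: "subgroup H G"
  shows "H = {y \<in> carrier G. y [^] card H = \<one>}"
proof -
  have "H \<subseteq> {y \<in> carrier G. y [^] card H = \<one>}"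
    using pow_ord_sub[OF H] subgroup.mem_carrier[OF H] by blast
  moreover have "card {y \<in> carrier G. y [^] card H = \<one>} = card H"
    using card_roots[OF fin g card_sub_dvd[OF fin H]] .
  moreover have "finite {y \<in> carrier G. y [^] card H = \<one>}" using fin by simp
  ultimately show ?thesis by (simp add: card_subset_eq)
qed

lemma psi_factor:
  assumes fin: "finite (carrier G)" and g: "g \<in> carrier G" "ord g = order G"
    and sqf: "squarefree (order G)"
    and H: "subgroup H G" and K: "subgroup K G" and KH: "K \<subseteq> H"
  shows "(\<Sum>x\<in>K. ord x) dvd (\<Sum>x\<in>H. ord x)"
proof -
  define d where "d = card H"
  define e where "e = card K"
  define e' where "e' = d div e"
  define L where "L = {y \<in> carrier G. y [^] e' = \<one>}"
  have ed: "e dvd d" using card_sub_sub_dvd[OF H K KH] d_def e_def by simp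
  have dn: "d dvd order G" using card_sub_dvd[OF fin H] d_def by simp
  have finH: "finite H" using fin H subgroup.subset finite_subset by blast
  have finK: "finite K" using fin K subgroup.subset finite_subset by blast
  have "H \<noteq> {}" using subgroup.one_closed[OF H] by blast
  then have dpos: "0 < d" using d_def finH by (simp add: card_gt_0_iff)
  have "K \<noteq> {}" using subgroup.one_closed[OF K] by blast
  then have epos: "0 < e" using e_def finK by (simp add: card_gt_0_iff)
  have dee: "d = e * e'" using ed e'_def by simp
  have e'n: "e' dvd order G" using dn unfolding dee by (rule dvd_mult_right)
  have "squarefree d" using squarefree_mono[OF dn sqf] .
  then have cp: "coprime e e'" using dee sqf_coprime by simp
  have Keq: "K = {y \<in> carrier G. y [^] e = \<one>}" using cyclic_sub_roots[OF fin g K] e_def by simp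
  have Heq: "H = {y \<in> carrier G. y [^] d = \<one>}" using cyclic_sub_roots[OF fin g H] d_def by simp
  have cardL: "card L = e'" using card_roots[OF fin g e'n] L_def by simp
  have finL: "finite L" using fin L_def by simp
  have LH: "L \<subseteq> H"
  proof
    fix y assume "y \<in> L"
    then have y: "y \<in> carrier G" "y [^] e' = \<one>" using L_def by auto
    then have "y [^] d = \<one>" using dee y by (simp add: nat_pow_pow[symmetric] mult.commute)
    then show "y \<in> H" using Heq y by simp
  qed
  have comm: "\<And>a b. a \<in> carrier G \<Longrightarrow> b \<in> carrier G \<Longrightarrow> a \<otimes> b = b \<otimes> a"
    using gen_comm[OF fin subgroup_self g(1)] g(2) by (simp add: order_def)
  define f where "f = (\<lambda>(k, l). k \<otimes> l)"
  have inj: "inj_on f (K \<times> L)"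
  proof (rule inj_onI, clarify)
    fix k l k' l' assume a: "k \<in> K" "l \<in> L" "k' \<in> K" "l' \<in> L" and eq: "f (k, l) = f (k', l')"
    have kc: "k \<in> carrier G" "k' \<in> carrier G" "k [^] e = \<one>" "k' [^] e = \<one>" using a Keq by auto
    have lc: "l \<in> carrier G" "l' \<in> carrier G" "l [^] e' = \<one>" "l' [^] e' = \<one>" using a L_def by auto
    have "(k \<otimes> l) [^] e = (k' \<otimes> l') [^] e" using eq f_def by simp
    then have "l [^] e = l' [^] e" using kc lc comm by (simp add: pow_mult_distrib)
    then have ll: "l = l'" using pow_inj_coprime[OF lc cp] epos by simp
    then have "k \<otimes> l = k' \<otimes> l" using eq f_def by simp
    then have "k = k'" using kc(1,2) lc(1) by (simp add: r_cancel)
    then show "k = k' \<and> l = l'" using ll by simp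
  qed
  have img: "f ` (K \<times> L) = H"
  proof -
    have "f ` (K \<times> L) \<subseteq> H" using KH LH subgroup.m_closed[OF H] f_def by auto
    moreover have "card (f ` (K \<times> L)) = card H"
    proof -
      have "card (f ` (K \<times> L)) = card (K \<times> L)" using card_image[OF inj] .
      also have "\<dots> = e * e'" using cardL e_def by (simp add: card_cartesian_product)
      finally show ?thesis using dee d_def by simp
    qed
    ultimately show ?thesis using finH by (simp add: card_subset_eq)
  qed
  have "(\<Sum>x\<in>H. ord x) = (\<Sum>p\<in>K \<times> L. ord (f p))"
    using sum.reindex[OF inj, of ord] img by simp
  also have "\<dots> = (\<Sum>(k,l)\<in>K \<times> L. ord k * ord l)"
  proof (rule sum.cong[OF refl], clarify)
    fix k l assume a: "k \<in> K" "l \<in> L"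
    have kc: "k \<in> carrier G" "k [^] e = \<one>" using a Keq by auto
    have lc: "l \<in> carrier G" "l [^] e' = \<one>" using a L_def by auto
    have o1: "ord k dvd e" using pow_eq_id[OF kc(1)] kc(2) by simp
    have o2: "ord l dvd e'" using pow_eq_id[OF lc(1)] lc(2) by simp
    have "coprime (ord k) (ord l)" using coprime_divisors[OF o1 o2 cp] .
    then show "ord (f (k, l)) = ord k * ord l"
      using ord_mult_coprime[OF kc(1) lc(1) comm[OF kc(1) lc(1)]] f_def by simp
  qed
  also have "\<dots> = (\<Sum>x\<in>K. ord x) * (\<Sum>x\<in>L. ord x)"
    by (simp add: sum_product sum.cartesian_product)
  finally show ?thesis by simp
qed


lemma dir2:
  assumes fin: "finite (carrier G)" and cyc: "cyclic_group G" and sqf: "squarefree (order G)"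
  shows "\<forall>H. subgroup H G \<longrightarrow> psi_divisible (G\<lparr>carrier := H\<rparr>)"
proof (intro allI impI)
  fix H assume H: "subgroup H G"
  obtain g where g: "g \<in> carrier G" "ord g = order G" using cyc cyclic_iff_gen[OF fin] by blast
  show "psi_divisible (G\<lparr>carrier := H\<rparr>)" unfolding psi_divisible_def
  proof (intro allI impI)
    fix K assume K: "subgroup K (G\<lparr>carrier := H\<rparr>)"
    have KG: "subgroup K G" and KH: "K \<subseteq> H" using subgroup_of_sub[OF H K] by auto
    have "psi (G\<lparr>carrier := H, carrier := K\<rparr>) = (\<Sum>x\<in>K. ord x)" using psi_sub[OF KG] by simp
    moreover have "psi (G\<lparr>carrier := H\<rparr>) = (\<Sum>x\<in>H. ord x)" using psi_sub[OF H] .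
    ultimately show "psi (G\<lparr>carrier := H, carrier := K\<rparr>) dvd psi (G\<lparr>carrier := H\<rparr>)"
      using psi_factor[OF fin g sqf H KG KH] by simp
  qed
qed

lemma div_all:
  assumes hyp: "\<forall>H. subgroup H G \<longrightarrow> psi_divisible (G\<lparr>carrier := H\<rparr>)"
    and H: "subgroup H G" and K: "subgroup K G" and KH: "K \<subseteq> H"
  shows "(\<Sum>x\<in>K. ord x) dvd (\<Sum>x\<in>H. ord x)"
proof -
  have pd: "psi_divisible (G\<lparr>carrier := H\<rparr>)" using hyp H by blast
  have KH': "subgroup K (G\<lparr>carrier := H\<rparr>)" using subgroup_incl[OF K H KH] .
  have "psi (G\<lparr>carrier := H, carrier := K\<rparr>) dvd psi (G\<lparr>carrier := H\<rparr>)"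
    using pd KH' unfolding psi_divisible_def by blast
  then show ?thesis using psi_sub[OF K] psi_sub[OF H] by simp
qed

lemma sub_finite: "finite (carrier G) \<Longrightarrow> subgroup H G \<Longrightarrow> finite H"
  using subgroup.subset finite_subset by blast

lemma sqf_step:
  assumes fin: "finite (carrier G)"
    and DIV: "\<And>H K. subgroup H G \<Longrightarrow> subgroup K G \<Longrightarrow> K \<subseteq> H \<Longrightarrow> (\<Sum>x\<in>K. ord x) dvd (\<Sum>x\<in>H. ord x)"
  shows "squarefree (order G)"
proof -
  have "\<one> \<in> carrier G" by simp
  then have n0: "order G \<noteq> 0" using fin by (auto simp: order_def)
  show ?thesis unfolding squarefree_factorial_semiring[OF n0]
  proof (intro allI impI notI)
    fix p :: nat assume p: "Factorial_Ring.prime p" and pd: "p ^ 2 dvd order G"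
    have p2: "2 \<le> p" using prime_ge_2_nat[OF p] .
    have og: "order G = p ^ 2 * (order G div p ^ 2)" using pd by simp
    obtain P where P: "subgroup P G" "card P = p ^ 2" using sylow_thm[OF p is_group og fin] by blast
    have finP: "finite P" using sub_finite[OF fin P(1)] .
    have oneP: "\<one> \<in> P" using one_in_sub[OF P(1)] .
    have ordP: "\<And>y. y \<in> P \<Longrightarrow> ord y = 1 \<or> ord y = p \<or> ord y = p ^ 2"
      using ord_dvd_sub[OF P(1)] P(2) dvd_p2[OF p] by metis
    have pp: "p * p = p ^ 2" by (simp add: power2_eq_square)
    show False
    proof (cases "\<exists>x\<in>P. ord x = p ^ 2")
      case True
      then obtain x where x: "x \<in> P" "ord x = p ^ 2" by blast
      have xc: "x \<in> carrier G" using subgroup.mem_carrier[OF P(1) x(1)] .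
      define K where "K = generate G {x [^] p}"
      have xp: "x [^] p \<in> carrier G" using xc by simp
      have oxp: "ord (x [^] p) = p" using ord_pow[OF xc] x(2) p2 by (simp add: power2_eq_square)
      have K: "subgroup K G" unfolding K_def using generate_is_subgroup xp by blast
      have cK: "card K = p" unfolding K_def using generate_pow_card[OF xp] oxp by simp
      interpret H0: group "G\<lparr>carrier := P\<rparr>" using subgroup_imp_group[OF P(1)] .
      have "x [^]\<^bsub>G\<lparr>carrier := P\<rparr>\<^esub> p \<in> P" using H0.nat_pow_closed[of x p] x(1) by simp
      then have "x [^] p \<in> P" by (simp add: pow_sub)
      then have KP: "K \<subseteq> P" unfolding K_def using generate_subgroup_incl[OF _ P(1)] by blast
      have sK: "(\<Sum>y\<in>K. ord y) = 1 + (p - 1) * p" using psi_prime_sub[OF K] cK p by simp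
      define T where "T = {y \<in> P. y [^] p = \<one>}"
      have "card {y \<in> carrier (G\<lparr>carrier := P\<rparr>). y [^]\<^bsub>G\<lparr>carrier := P\<rparr>\<^esub> p = \<one>\<^bsub>G\<lparr>carrier := P\<rparr>\<^esub>} = p"
      proof (rule H0.card_roots)
        show "finite (carrier (G\<lparr>carrier := P\<rparr>))" using finP by simp
        show "x \<in> carrier (G\<lparr>carrier := P\<rparr>)" using x by simp
        show "H0.ord x = order (G\<lparr>carrier := P\<rparr>)" using ord_sub[OF P(1)] x(2) P(2) by (simp add: order_def)
        show "p dvd order (G\<lparr>carrier := P\<rparr>)" using P(2) by (simp add: order_def)
      qed
      then have cT: "card T = p" unfolding T_def by (simp add: pow_sub)
      have TP: "T \<subseteq> P" unfolding T_def by blast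
      have finT: "finite T" using finite_subset[OF TP finP] .
      have sT: "(\<Sum>y\<in>T. ord y) = 1 + (p - 1) * p"
      proof -
        have "(\<Sum>y\<in>T. ord y) = 1 + (card T - 1) * p"
        proof (rule sum_ord_const[OF finT])
          show "\<one> \<in> T" unfolding T_def using oneP by simp
          show "\<forall>y\<in>T - {\<one>}. ord y = p"
          proof
            fix y assume y: "y \<in> T - {\<one>}"
            have yc: "y \<in> carrier G" using y TP subgroup.mem_carrier[OF P(1)] by blast
            have "ord y dvd p" using y pow_eq_id[OF yc] unfolding T_def by simp
            moreover have "ord y \<noteq> 1" using y ord_eq_1[OF yc] by simp
            ultimately show "ord y = p" using p unfolding prime_nat_iff by blast
          qed
        qed
        then show ?thesis using cT by simp
      qed
      have sPT: "(\<Sum>y\<in>P - T. ord y) = (p * p - p) * (p * p)"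
      proof -
        have "(\<Sum>y\<in>P - T. ord y) = (\<Sum>y\<in>P - T. p * p)"
        proof (rule sum.cong[OF refl])
          fix y assume y: "y \<in> P - T"
          have yc: "y \<in> carrier G" using y subgroup.mem_carrier[OF P(1)] by blast
          have "\<not> ord y dvd p" using y pow_eq_id[OF yc] unfolding T_def by simp
          then have "ord y \<noteq> 1" "ord y \<noteq> p" by auto
          then show "ord y = p * p" using ordP[of y] y pp by auto
        qed
        also have "\<dots> = card (P - T) * (p * p)" by simp
        also have "card (P - T) = p * p - p" using card_Diff_subset[OF finT TP] P(2) cT pp by simp
        finally show ?thesis .
      qed
      have "(\<Sum>y\<in>P. ord y) = (\<Sum>y\<in>T. ord y) + (\<Sum>y\<in>P - T. ord y)"
        using sum.subset_diff[OF TP finP] by (simp add: add.commute)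
      then have sP: "(\<Sum>y\<in>P. ord y) = 1 + (p - 1) * p + (p * p - p) * (p * p)" using sT sPT by simp
      have "(\<Sum>y\<in>K. ord y) dvd (\<Sum>y\<in>P. ord y)" using DIV[OF P(1) K KP] .
      then show False using nt1[OF p2] sK sP by simp
    next
      case False
      have allp: "\<And>y. y \<in> P - {\<one>} \<Longrightarrow> ord y = p"
      proof -
        fix y assume y: "y \<in> P - {\<one>}"
        have yc: "y \<in> carrier G" using y subgroup.mem_carrier[OF P(1)] by blast
        have "ord y \<noteq> 1" using y ord_eq_1[OF yc] by simp
        moreover have "ord y \<noteq> p ^ 2" using False y by blast
        ultimately show "ord y = p" using ordP[of y] y by blast
      qed
      have sP: "(\<Sum>y\<in>P. ord y) = 1 + (p * p - 1) * p"
        using sum_ord_const[OF finP oneP] allp P(2) pp by simp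
      have "2 * 2 \<le> p * p" using mult_le_mono[OF p2 p2] .
      then have "card P > 1" using P(2) pp by simp
      then have "P \<noteq> {\<one>}" by auto
      then obtain y where y: "y \<in> P" "y \<noteq> \<one>" using oneP by blast
      have yc: "y \<in> carrier G" using subgroup.mem_carrier[OF P(1) y(1)] .
      define K where "K = generate G {y}"
      have K: "subgroup K G" unfolding K_def using generate_is_subgroup yc by blast
      have cK: "card K = p" unfolding K_def using generate_pow_card[OF yc] allp y by simp
      have KP: "K \<subseteq> P" unfolding K_def using generate_subgroup_incl[OF _ P(1)] y(1) by blast
      have sK: "(\<Sum>y\<in>K. ord y) = 1 + (p - 1) * p" using psi_prime_sub[OF K] cK p by simp
      have "(\<Sum>y\<in>K. ord y) dvd (\<Sum>y\<in>P. ord y)" using DIV[OF P(1) K KP] .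
      then show False using nt2[OF p2] sK sP by simp
    qed
  qed
qed


lemma inv_cancel_left1 [simp]: "k \<in> carrier G \<Longrightarrow> x \<in> carrier G \<Longrightarrow> inv k \<otimes> (k \<otimes> x) = x"
  by (simp add: m_assoc[symmetric])

lemma inv_cancel_left2 [simp]: "k \<in> carrier G \<Longrightarrow> x \<in> carrier G \<Longrightarrow> k \<otimes> (inv k \<otimes> x) = x"
  by (simp add: m_assoc[symmetric])

lemma cj_closed [simp]: "k \<in> carrier G \<Longrightarrow> a \<in> carrier G \<Longrightarrow> cj G k a \<in> carrier G"
  by (simp add: cj_def)

lemma cj_mult: "k \<in> carrier G \<Longrightarrow> a \<in> carrier G \<Longrightarrow> b \<in> carrier G \<Longrightarrow> cj G k (a \<otimes> b) = cj G k a \<otimes> cj G k b"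
  by (simp add: cj_def m_assoc)

lemma cj_cj: "k \<in> carrier G \<Longrightarrow> l \<in> carrier G \<Longrightarrow> a \<in> carrier G \<Longrightarrow> cj G k (cj G l a) = cj G (k \<otimes> l) a"
  by (simp add: cj_def m_assoc inv_mult_group)

lemma cj_inv [simp]: "k \<in> carrier G \<Longrightarrow> a \<in> carrier G \<Longrightarrow> cj G (inv k) (cj G k a) = a"
  by (simp add: cj_def m_assoc)

lemma cj_inv2 [simp]: "k \<in> carrier G \<Longrightarrow> a \<in> carrier G \<Longrightarrow> cj G k (cj G (inv k) a) = a"
  by (simp add: cj_def m_assoc)

lemma cj_one [simp]: "a \<in> carrier G \<Longrightarrow> cj G \<one> a = a"
  by (simp add: cj_def)

lemma cj_fix: "k \<in> carrier G \<Longrightarrow> a \<in> carrier G \<Longrightarrow> a \<otimes> k = k \<otimes> a \<Longrightarrow> cj G k a = a"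
proof -
  assume k: "k \<in> carrier G" and a: "a \<in> carrier G" and c: "a \<otimes> k = k \<otimes> a"
  have "cj G k a = (a \<otimes> k) \<otimes> inv k" unfolding cj_def using c by simp
  also have "\<dots> = a" using k a by (simp add: m_assoc)
  finally show ?thesis .
qed

lemma cj_pow: "k \<in> carrier G \<Longrightarrow> a \<in> carrier G \<Longrightarrow> cj G k (a [^] (n::nat)) = (cj G k a) [^] n"
proof (induction n)
  case 0 then show ?case by (simp add: cj_def)
next
  case (Suc n) then show ?case by (simp add: cj_mult)
qed

lemma commute_inv: "a \<in> carrier G \<Longrightarrow> b \<in> carrier G \<Longrightarrow> a \<otimes> b = b \<otimes> a \<Longrightarrow> inv a \<otimes> b = b \<otimes> inv a"
proof -
  assume a: "a \<in> carrier G" and b: "b \<in> carrier G" and c: "a \<otimes> b = b \<otimes> a"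
  have "inv a \<otimes> b = inv a \<otimes> (b \<otimes> a) \<otimes> inv a" using a b by (simp add: m_assoc)
  also have "\<dots> = inv a \<otimes> (a \<otimes> b) \<otimes> inv a" using c by simp
  also have "\<dots> = b \<otimes> inv a" using a b by (simp add: m_assoc)
  finally show ?thesis .
qed

lemma normal_mult_sub: "N \<lhd> G \<Longrightarrow> subgroup S G \<Longrightarrow> subgroup (N <#> S) G"
  using second_isomorphism_grp.normal_set_mult_subgroup[of N G S]
  unfolding second_isomorphism_grp_def second_isomorphism_grp_axioms_def by blast

lemma set_mult_left: "subgroup S G \<Longrightarrow> N \<subseteq> carrier G \<Longrightarrow> N \<subseteq> N <#> S"
  unfolding set_mult_def using subgroup.one_closed by force

lemma set_mult_right: "subgroup N G \<Longrightarrow> S \<subseteq> carrier G \<Longrightarrow> S \<subseteq> N <#> S"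
  unfolding set_mult_def using subgroup.one_closed by force

lemma card_set_mult_le: "finite N \<Longrightarrow> finite S \<Longrightarrow> card (N <#> S) \<le> card N * card S"
proof -
  assume f: "finite N" "finite S"
  have eq: "N <#> S = (\<lambda>(a, b). a \<otimes> b) ` (N \<times> S)" unfolding set_mult_def by auto
  have "card (N <#> S) \<le> card (N \<times> S)" unfolding eq by (rule card_image_le) (simp add: f)
  then show ?thesis by (simp add: card_cartesian_product)
qed

lemma prod_card:
  assumes fin: "finite (carrier G)" and H: "subgroup H G" and K: "subgroup K G"
  shows "card (H <#> K) * card (H \<inter> K) = card H * card K"
proof -
  define f where "f = (\<lambda>(a, b). a \<otimes> b)"
  have img: "f ` (H \<times> K) = H <#> K" unfolding set_mult_def f_def by auto
  have finHK: "finite (H \<times> K)" using sub_finite[OF fin H] sub_finite[OF fin K] by simp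
  have Hc: "\<And>x. x \<in> H \<Longrightarrow> x \<in> carrier G" using subgroup.mem_carrier[OF H] .
  have Kc: "\<And>x. x \<in> K \<Longrightarrow> x \<in> carrier G" using subgroup.mem_carrier[OF K] .
  have "card (H \<times> K) = card (H \<inter> K) * card (f ` (H \<times> K))"
  proof (rule card_fibers[OF finHK])
    fix v assume "v \<in> f ` (H \<times> K)"
    then obtain h k where hk: "h \<in> H" "k \<in> K" "v = h \<otimes> k" unfolding f_def by auto
    have hc: "h \<in> carrier G" and kc: "k \<in> carrier G" using hk Hc Kc by auto
    define g where "g = (\<lambda>d. (h \<otimes> d, inv d \<otimes> k))"
    have "{a \<in> H \<times> K. f a = v} = g ` (H \<inter> K)"
    proof (intro Set.set_eqI iffI)
      fix a assume a: "a \<in> {a \<in> H \<times> K. f a = v}"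
      then obtain h' k' where a': "a = (h', k')" "h' \<in> H" "k' \<in> K" "h' \<otimes> k' = h \<otimes> k"
        using hk unfolding f_def by auto
      have h'c: "h' \<in> carrier G" and k'c: "k' \<in> carrier G" using a' Hc Kc by auto
      define d where "d = inv h \<otimes> h'"
      have dH: "d \<in> H" unfolding d_def using subgroup.m_closed[OF H] subgroup.m_inv_closed[OF H] hk a' by blast
      have "d = inv h \<otimes> (h' \<otimes> k') \<otimes> inv k'" unfolding d_def using hc h'c k'c by (simp add: m_assoc)
      also have "\<dots> = k \<otimes> inv k'" using a'(4) hc kc k'c by (simp add: m_assoc)
      finally have dk: "d = k \<otimes> inv k'" .
      have dK: "d \<in> K" unfolding dk using subgroup.m_closed[OF K] subgroup.m_inv_closed[OF K] hk a' by blast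
      have "h \<otimes> d = h'" unfolding d_def using hc h'c by simp
      moreover have "inv d \<otimes> k = k'" unfolding dk using kc k'c by (simp add: inv_mult_group m_assoc)
      ultimately show "a \<in> g ` (H \<inter> K)" using a'(1) dH dK g_def by auto
    next
      fix a assume "a \<in> g ` (H \<inter> K)"
      then obtain d where d: "d \<in> H" "d \<in> K" "a = (h \<otimes> d, inv d \<otimes> k)" unfolding g_def by auto
      have dc: "d \<in> carrier G" using d Hc by auto
      have "h \<otimes> d \<in> H" using subgroup.m_closed[OF H] hk d by blast
      moreover have "inv d \<otimes> k \<in> K" using subgroup.m_closed[OF K] subgroup.m_inv_closed[OF K] hk d by blast
      moreover have "(h \<otimes> d) \<otimes> (inv d \<otimes> k) = h \<otimes> k" using hc kc dc by (simp add: m_assoc)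
      ultimately show "a \<in> {a \<in> H \<times> K. f a = v}" using d hk unfolding f_def by simp
    qed
    moreover have "inj_on g (H \<inter> K)"
    proof (rule inj_onI)
      fix d d' assume "d \<in> H \<inter> K" "d' \<in> H \<inter> K" "g d = g d'"
      then have "h \<otimes> d = h \<otimes> d'" "d \<in> carrier G" "d' \<in> carrier G" unfolding g_def using Hc by auto
      then show "d = d'" using hc by simp
    qed
    ultimately show "card {a \<in> H \<times> K. f a = v} = card (H \<inter> K)" by (simp add: card_image)
  qed
  then show ?thesis using img by (simp add: card_cartesian_product mult.commute)
qed

end

locale mnc = group +
  assumes finG: "finite (carrier G)"
    and sqfG: "squarefree (order G)"
    and ncycG: "\<forall>g\<in>carrier G. ord g \<noteq> order G"
    and propG: "\<And>K. subgroup K G \<Longrightarrow> K \<noteq> carrier G \<Longrightarrow> \<exists>g\<in>K. ord g = card K"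
    and DIVG: "\<And>K. subgroup K G \<Longrightarrow> (\<Sum>x\<in>K. ord x) dvd (\<Sum>x\<in>carrier G. ord x)"
begin

lemma propcomm: "subgroup K G \<Longrightarrow> K \<noteq> carrier G \<Longrightarrow> a \<in> K \<Longrightarrow> b \<in> K \<Longrightarrow> a \<otimes> b = b \<otimes> a"
proof -
  assume K: "subgroup K G" "K \<noteq> carrier G" and ab: "a \<in> K" "b \<in> K"
  obtain g where g: "g \<in> K" "ord g = card K" using propG[OF K] by blast
  show ?thesis using gen_comm[OF finG K(1) g ab] .
qed

definition Z where "Z = {z \<in> carrier G. \<forall>g\<in>carrier G. z \<otimes> g = g \<otimes> z}"
definition cen where "cen x = {g \<in> carrier G. g \<otimes> x = x \<otimes> g}"

lemma Z_sub: "subgroup Z G"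
proof (rule subgroupI)
  show "Z \<subseteq> carrier G" unfolding Z_def by blast
  show "Z \<noteq> {}" unfolding Z_def using one_closed by force
  fix a b assume a: "a \<in> Z" and b: "b \<in> Z"
  show "inv a \<in> Z" using a commute_inv unfolding Z_def by simp
  have ac: "a \<in> carrier G" and bc: "b \<in> carrier G" using a b unfolding Z_def by auto
  have "\<forall>g\<in>carrier G. a \<otimes> b \<otimes> g = g \<otimes> (a \<otimes> b)"
  proof
    fix g assume g: "g \<in> carrier G"
    have "a \<otimes> b \<otimes> g = a \<otimes> (b \<otimes> g)" using ac bc g by (simp add: m_assoc)
    also have "\<dots> = a \<otimes> (g \<otimes> b)" using b g unfolding Z_def by simp
    also have "\<dots> = (a \<otimes> g) \<otimes> b" using ac bc g by (simp add: m_assoc)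
    also have "\<dots> = (g \<otimes> a) \<otimes> b" using a g unfolding Z_def by simp
    also have "\<dots> = g \<otimes> (a \<otimes> b)" using ac bc g by (simp add: m_assoc)
    finally show "a \<otimes> b \<otimes> g = g \<otimes> (a \<otimes> b)" .
  qed
  then show "a \<otimes> b \<in> Z" unfolding Z_def using ac bc by simp
qed

lemma cen_sub: assumes x: "x \<in> carrier G" shows "subgroup (cen x) G"
proof (rule subgroupI)
  show "cen x \<subseteq> carrier G" unfolding cen_def by blast
  show "cen x \<noteq> {}" unfolding cen_def using one_closed x by force
  fix a b assume a: "a \<in> cen x" and b: "b \<in> cen x"
  show "inv a \<in> cen x" using a commute_inv x unfolding cen_def by auto
  have ac: "a \<in> carrier G" and bc: "b \<in> carrier G" using a b unfolding cen_def by auto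
  have "a \<otimes> b \<otimes> x = a \<otimes> (b \<otimes> x)" using ac bc x by (simp add: m_assoc)
  also have "\<dots> = a \<otimes> (x \<otimes> b)" using b unfolding cen_def by simp
  also have "\<dots> = (a \<otimes> x) \<otimes> b" using ac bc x by (simp add: m_assoc)
  also have "\<dots> = (x \<otimes> a) \<otimes> b" using a unfolding cen_def by simp
  also have "\<dots> = x \<otimes> (a \<otimes> b)" using ac bc x by (simp add: m_assoc)
  finally show "a \<otimes> b \<in> cen x" unfolding cen_def using ac bc by simp
qed

lemma x_in_cen: "x \<in> carrier G \<Longrightarrow> x \<in> cen x"
  unfolding cen_def by simp

lemma Z_cen: "x \<in> carrier G \<Longrightarrow> Z \<subseteq> cen x"
  unfolding Z_def cen_def by auto

lemma cen_proper: assumes x: "x \<in> carrier G" "x \<notin> Z" shows "cen x \<noteq> carrier G"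
proof
  assume eq: "cen x = carrier G"
  obtain g where g: "g \<in> carrier G" "x \<otimes> g \<noteq> g \<otimes> x" using x unfolding Z_def by auto
  have "g \<in> cen x" using eq g by simp
  then show False using g unfolding cen_def by simp
qed

lemma cen_comm: "x \<in> carrier G \<Longrightarrow> x \<notin> Z \<Longrightarrow> a \<in> cen x \<Longrightarrow> b \<in> cen x \<Longrightarrow> a \<otimes> b = b \<otimes> a"
  using propcomm[OF cen_sub cen_proper] by blast

lemma cen_eq:
  assumes x: "x \<in> carrier G" "x \<notin> Z" and y: "y \<in> cen x" "y \<notin> Z"
  shows "cen y = cen x"
proof
  have yc: "y \<in> carrier G" using y unfolding cen_def by simp
  show "cen x \<subseteq> cen y"
  proof
    fix a assume a: "a \<in> cen x"
    then have "a \<otimes> y = y \<otimes> a" using cen_comm[OF x a y(1)] by simp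
    then show "a \<in> cen y" using a unfolding cen_def by simp
  qed
  show "cen y \<subseteq> cen x"
  proof
    fix a assume a: "a \<in> cen y"
    have "x \<in> cen y" using y(1) x unfolding cen_def by simp
    then have "a \<otimes> x = x \<otimes> a" using cen_comm[OF yc y(2) a] by simp
    then show "a \<in> cen x" using a unfolding cen_def by simp
  qed
qed

lemma cen_max:
  assumes x: "x \<in> carrier G" "x \<notin> Z" and K: "subgroup K G" "cen x \<subseteq> K" "K \<noteq> carrier G"
  shows "K = cen x"
proof
  show "K \<subseteq> cen x"
  proof
    fix a assume a: "a \<in> K"
    have "x \<in> K" using K(2) x_in_cen[OF x(1)] by blast
    then have "a \<otimes> x = x \<otimes> a" using propcomm[OF K(1) K(3) a] by simp
    then show "a \<in> cen x" using a subgroup.mem_carrier[OF K(1)] unfolding cen_def by simp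
  qed
qed (use K in simp)

lemma cj_Z: "k \<in> carrier G \<Longrightarrow> z \<in> Z \<Longrightarrow> cj G k z = z"
  unfolding Z_def using cj_fix by auto

lemma cj_notZ: assumes k: "k \<in> carrier G" and x: "x \<in> carrier G" "x \<notin> Z" shows "cj G k x \<notin> Z"
proof
  assume "cj G k x \<in> Z"
  then have "cj G (inv k) (cj G k x) = cj G k x" using cj_Z k by simp
  then have "x = cj G k x" using k x by simp
  then show False using x \<open>cj G k x \<in> Z\<close> by simp
qed

lemma cen_cj:
  assumes k: "k \<in> carrier G" and x: "x \<in> carrier G"
  shows "cen (cj G k x) = cj G k ` cen x"
proof
  show "cj G k ` cen x \<subseteq> cen (cj G k x)"
  proof
    fix b assume "b \<in> cj G k ` cen x"
    then obtain a where a: "a \<in> cen x" "b = cj G k a" by blast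
    have ac: "a \<in> carrier G" using a unfolding cen_def by simp
    have "cj G k a \<otimes> cj G k x = cj G k (a \<otimes> x)" using cj_mult k ac x by simp
    also have "\<dots> = cj G k (x \<otimes> a)" using a unfolding cen_def by simp
    also have "\<dots> = cj G k x \<otimes> cj G k a" using cj_mult k ac x by simp
    finally show "b \<in> cen (cj G k x)" using a k ac unfolding cen_def by simp
  qed
  show "cen (cj G k x) \<subseteq> cj G k ` cen x"
  proof
    fix b assume b: "b \<in> cen (cj G k x)"
    have bc: "b \<in> carrier G" using b unfolding cen_def by simp
    define a where "a = cj G (inv k) b"
    have ac: "a \<in> carrier G" unfolding a_def using k bc by simp
    have ik: "inv k \<in> carrier G" using k by simp
    have "a \<otimes> x = cj G (inv k) b \<otimes> cj G (inv k) (cj G k x)" unfolding a_def using k x by simp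
    also have "\<dots> = cj G (inv k) (b \<otimes> cj G k x)" using cj_mult[OF ik bc] k x by simp
    also have "\<dots> = cj G (inv k) (cj G k x \<otimes> b)" using b unfolding cen_def by simp
    also have "\<dots> = cj G (inv k) (cj G k x) \<otimes> cj G (inv k) b" using cj_mult[OF ik _ bc] k x by simp
    also have "\<dots> = x \<otimes> a" unfolding a_def using k x by simp
    finally have "a \<in> cen x" using ac unfolding cen_def by simp
    moreover have "b = cj G k a" unfolding a_def using k bc by simp
    ultimately show "b \<in> cj G k ` cen x" by blast
  qed
qed

end


lemma half_lemma:
  fixes c u n z :: nat
  assumes e: "c * u = n * (c - z)" and cz: "2 * z \<le> c" and c: "0 < c"
  shows "n \<le> 2 * u"
proof -
  have "c \<le> 2 * (c - z)" using cz by simp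
  then have "n * c \<le> n * (2 * (c - z))" by (rule mult_le_mono2)
  also have "\<dots> = 2 * (n * (c - z))" by simp
  also have "\<dots> = c * (2 * u)" using e by simp
  finally have "c * n \<le> c * (2 * u)" by (simp add: mult.commute)
  then show ?thesis using c by simp
qed

context mnc
begin

definition U where "U x = (\<lambda>(g, y). cj G g y) ` (carrier G \<times> (cen x - Z))"

lemma image_fix: "(\<And>a. a \<in> A \<Longrightarrow> f a = a) \<Longrightarrow> f ` A = A"
  by force

lemma cen_carrier: "cen x \<subseteq> carrier G"
  unfolding cen_def by blast

lemma normalizer_cen:
  assumes x: "x \<in> carrier G" "x \<notin> Z" and nn: "\<not> (cen x \<lhd> G)"
    and k: "k \<in> carrier G" and eq: "cj G k ` cen x = cen x"
  shows "k \<in> cen x"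
proof -
  define C where "C = cen x"
  define N where "N = {k \<in> carrier G. cj G k ` C = C}"
  have Cc: "\<And>a. a \<in> C \<Longrightarrow> a \<in> carrier G" using cen_carrier C_def by blast
  have N: "subgroup N G"
  proof (rule subgroupI)
    show "N \<subseteq> carrier G" unfolding N_def by blast
    have "cj G \<one> ` C = C" by (rule image_fix) (simp add: Cc)
    then show "N \<noteq> {}" unfolding N_def by force
    fix a b assume a: "a \<in> N" and b: "b \<in> N"
    have ac: "a \<in> carrier G" and bc: "b \<in> carrier G" using a b N_def by auto
    have "cj G (inv a) ` C = cj G (inv a) ` (cj G a ` C)" using a N_def by simp
    also have "\<dots> = (\<lambda>y. cj G (inv a) (cj G a y)) ` C" by (simp add: image_image)
    also have "\<dots> = C" by (rule image_fix) (simp add: ac Cc)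
    finally show "inv a \<in> N" unfolding N_def using ac by simp
    have "cj G (a \<otimes> b) ` C = (\<lambda>y. cj G a (cj G b y)) ` C"
      by (rule image_cong[OF refl]) (simp add: cj_cj ac bc Cc)
    also have "\<dots> = cj G a ` (cj G b ` C)" by (simp add: image_image)
    also have "\<dots> = C" using a b N_def by simp
    finally show "a \<otimes> b \<in> N" unfolding N_def using ac bc by simp
  qed
  have CN: "C \<subseteq> N"
  proof
    fix k assume kC: "k \<in> C"
    have "cj G k ` C = C"
    proof (rule image_fix)
      fix a assume "a \<in> C"
      then have "a \<otimes> k = k \<otimes> a" using cen_comm[OF x] kC C_def by blast
      then show "cj G k a = a" using cj_fix Cc kC \<open>a \<in> C\<close> by blast
    qed
    then show "k \<in> N" unfolding N_def using Cc kC by simp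
  qed
  have "N \<noteq> carrier G"
  proof
    assume NG: "N = carrier G"
    have "C \<lhd> G" unfolding normal_inv_iff
    proof (intro conjI ballI)
      show "subgroup C G" using cen_sub[OF x(1)] C_def by simp
      fix g h assume g: "g \<in> carrier G" and h: "h \<in> C"
      have "cj G g h \<in> cj G g ` C" using h by blast
      then show "g \<otimes> h \<otimes> inv g \<in> C" using g NG N_def unfolding cj_def by auto
    qed
    then show False using nn C_def by simp
  qed
  then have "N = C" using cen_max[OF x N] CN C_def by simp
  then show ?thesis using k eq C_def N_def by auto
qed

lemma U_sub: "x \<in> carrier G \<Longrightarrow> U x \<subseteq> carrier G - Z"
proof
  fix v assume "v \<in> U x"
  then obtain g y where gy: "g \<in> carrier G" "y \<in> cen x" "y \<notin> Z" "v = cj G g y" unfolding U_def by auto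
  have yc: "y \<in> carrier G" using gy cen_carrier by auto
  show "v \<in> carrier G - Z" using gy yc cj_notZ by simp
qed

lemma U_count:
  assumes x: "x \<in> carrier G" "x \<notin> Z" and nn: "\<not> (cen x \<lhd> G)"
  shows "order G * card (cen x - Z) = card (cen x) * card (U x)"
proof -
  define C where "C = cen x"
  define f where "f = (\<lambda>(g, y). cj G g y)"
  have Cc: "\<And>a. a \<in> C \<Longrightarrow> a \<in> carrier G" using cen_carrier C_def by blast
  have finA: "finite (carrier G \<times> (C - Z))" using finG sub_finite[OF finG cen_sub[OF x(1)]] C_def by simp
  have "card (carrier G \<times> (C - Z)) = card C * card (f ` (carrier G \<times> (C - Z)))"
  proof (rule card_fibers[OF finA])
    fix v assume "v \<in> f ` (carrier G \<times> (C - Z))"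
    then obtain g y where gy: "g \<in> carrier G" "y \<in> C" "y \<notin> Z" "v = cj G g y" unfolding f_def by auto
    have yc: "y \<in> carrier G" using gy Cc by simp
    have cy: "cen y = C" using cen_eq[OF x] gy C_def by simp
    define h where "h = (\<lambda>k. (g \<otimes> k, y))"
    have "{a \<in> carrier G \<times> (C - Z). f a = v} = h ` C"
    proof (intro Set.set_eqI iffI)
      fix a assume a: "a \<in> {a \<in> carrier G \<times> (C - Z). f a = v}"
      then obtain h' w where a': "a = (h', w)" "h' \<in> carrier G" "w \<in> C" "w \<notin> Z" "cj G h' w = cj G g y"
        using gy unfolding f_def by auto
      have wc: "w \<in> carrier G" using a' Cc by simp
      define k where "k = inv g \<otimes> h'"
      have kc: "k \<in> carrier G" unfolding k_def using gy a' by simp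
      have "cj G (inv g) (cj G h' w) = cj G k w" unfolding k_def by (rule cj_cj) (use gy a' wc in auto)
      moreover have "cj G (inv g) (cj G h' w) = y" using a'(5) gy yc by simp
      ultimately have kw: "cj G k w = y" by simp
      have cw: "cen w = C" using cen_eq[OF x] a' C_def by simp
      have "cj G k ` C = C" using cen_cj[OF kc wc] cw kw cy by simp
      then have kC: "k \<in> C" using normalizer_cen[OF x nn kc] C_def by simp
      have "w \<otimes> k = k \<otimes> w" using cen_comm[OF x] a'(3) kC C_def by blast
      then have "cj G k w = w" using cj_fix kc wc by blast
      then have wy: "w = y" using kw by simp
      have "g \<otimes> k = h'" unfolding k_def using gy a' by simp
      then show "a \<in> h ` C" using a' wy kC h_def by auto
    next
      fix a assume "a \<in> h ` C"
      then obtain k where k: "k \<in> C" "a = (g \<otimes> k, y)" using h_def by auto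
      have kc: "k \<in> carrier G" using k Cc by simp
      have "y \<otimes> k = k \<otimes> y" using cen_comm[OF x] gy(2) k(1) C_def by blast
      then have "cj G k y = y" using cj_fix kc yc by blast
      then have "cj G (g \<otimes> k) y = cj G g y" using cj_cj[OF gy(1) kc yc] by simp
      then show "a \<in> {a \<in> carrier G \<times> (C - Z). f a = v}" using k gy kc unfolding f_def by simp
    qed
    moreover have "inj_on h C"
    proof (rule inj_onI)
      fix k k' assume "k \<in> C" "k' \<in> C" "h k = h k'"
      then show "k = k'" using gy Cc h_def by simp
    qed
    ultimately show "card {a \<in> carrier G \<times> (C - Z). f a = v} = card C" by (simp add: card_image)
  qed
  then show ?thesis unfolding U_def f_def C_def by (simp add: card_cartesian_product order_def)
qed

lemma U_disj:
  assumes x0: "x0 \<in> carrier G" "x0 \<notin> Z" and x1: "x1 \<in> carrier G" "x1 \<notin> Z" "x1 \<notin> U x0"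
  shows "U x0 \<inter> U x1 = {}"
proof (rule ccontr)
  assume "U x0 \<inter> U x1 \<noteq> {}"
  then obtain v where "v \<in> U x0" "v \<in> U x1" by blast
  then obtain g y h w where gy: "g \<in> carrier G" "y \<in> cen x0" "y \<notin> Z" "v = cj G g y"
    and hw: "h \<in> carrier G" "w \<in> cen x1" "w \<notin> Z" "v = cj G h w" unfolding U_def by auto
  have yc: "y \<in> carrier G" and wc: "w \<in> carrier G" using gy hw cen_carrier by auto
  define k where "k = inv h \<otimes> g"
  have kc: "k \<in> carrier G" unfolding k_def using gy hw by simp
  have "w = cj G (inv h) v" using hw wc by simp
  also have "\<dots> = cj G k y" unfolding k_def using gy hw yc cj_cj by simp
  finally have wk: "w = cj G k y" .
  have "cen x1 = cen w" using cen_eq[OF x1(1,2) hw(2,3)] by simp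
  also have "\<dots> = cj G k ` cen y" using wk cen_cj[OF kc yc] by simp
  also have "\<dots> = cj G k ` cen x0" using cen_eq[OF x0 gy(2,3)] by simp
  finally have "x1 \<in> cj G k ` cen x0" using x_in_cen[OF x1(1)] by simp
  then obtain a where a: "a \<in> cen x0" "x1 = cj G k a" by blast
  have ac: "a \<in> carrier G" using a cen_carrier by auto
  have "a \<notin> Z" using a x1 cj_Z[OF kc] by auto
  then have "x1 \<in> U x0" unfolding U_def using a kc by force
  then show False using x1 by simp
qed

end


context mnc
begin

lemma finZ: "finite Z" using sub_finite[OF finG Z_sub] .

lemma oneZ: "\<one> \<in> Z" using one_in_sub[OF Z_sub] .

lemma cardZ_pos: "0 < card Z" using finZ oneZ by (auto simp: card_gt_0_iff)

lemma cen_gt_Z: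
  assumes x: "x \<in> carrier G" "x \<notin> Z"
  shows "2 * card Z \<le> card (cen x)"
proof -
  have fC: "finite (cen x)" using sub_finite[OF finG cen_sub[OF x(1)]] .
  have ZC: "Z \<subseteq> cen x" using Z_cen[OF x(1)] .
  have "card Z dvd card (cen x)" using card_sub_sub_dvd[OF cen_sub[OF x(1)] Z_sub ZC] .
  then obtain t where t: "card (cen x) = card Z * t" by (rule dvdE)
  have ne: "card (cen x) \<noteq> card Z"
  proof
    assume "card (cen x) = card Z"
    then have "Z = cen x" using card_subset_eq[OF fC ZC] by simp
    then show False using x x_in_cen by blast
  qed
  have t1: "t \<noteq> 1"
  proof
    assume "t = 1" then show False using t ne by simp
  qed
  have "0 < card (cen x)" using fC x_in_cen[OF x(1)] by (auto simp: card_gt_0_iff)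
  then have t0: "t \<noteq> 0" using t by (cases "t = 0") auto
  have "2 \<le> t" using t0 t1 by linarith
  then have "card Z * 2 \<le> card Z * t" by (rule mult_le_mono2)
  then show ?thesis using t by simp
qed

lemma U_big:
  assumes x: "x \<in> carrier G" "x \<notin> Z" and nn: "\<not> (cen x \<lhd> G)"
  shows "order G \<le> 2 * card (U x)"
proof -
  have fC: "finite (cen x)" using sub_finite[OF finG cen_sub[OF x(1)]] .
  have "card (cen x - Z) = card (cen x) - card Z" using card_Diff_subset[OF finZ Z_cen[OF x(1)]] .
  then have e: "card (cen x) * card (U x) = order G * (card (cen x) - card Z)" using U_count[OF x nn] by simp
  have "0 < card (cen x)" using fC x_in_cen[OF x(1)] by (auto simp: card_gt_0_iff)
  then show ?thesis using half_lemma[OF e cen_gt_Z[OF x]] by simp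
qed

lemma exists_normal:
  assumes nab: "Z \<noteq> carrier G"
  shows "\<exists>x\<in>carrier G. x \<notin> Z \<and> cen x \<lhd> G"
proof (rule ccontr)
  assume "\<not> (\<exists>x\<in>carrier G. x \<notin> Z \<and> cen x \<lhd> G)"
  then have nn: "\<And>x. x \<in> carrier G \<Longrightarrow> x \<notin> Z \<Longrightarrow> \<not> (cen x \<lhd> G)" by blast
  have ZG: "Z \<subseteq> carrier G" using subgroup.subset[OF Z_sub] .
  obtain x0 where x0: "x0 \<in> carrier G" "x0 \<notin> Z" using nab ZG by blast
  have fC: "finite (cen x0)" using sub_finite[OF finG cen_sub[OF x0(1)]] .
  have cd: "card (carrier G - Z) = order G - card Z" using card_Diff_subset[OF finZ ZG] by (simp add: order_def)
  have "U x0 \<noteq> carrier G - Z"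
  proof
    assume eq: "U x0 = carrier G - Z"
    have "card (cen x0 - Z) = card (cen x0) - card Z" using card_Diff_subset[OF finZ Z_cen[OF x0(1)]] .
    then have e: "order G * (card (cen x0) - card Z) = card (cen x0) * (order G - card Z)"
      using U_count[OF x0 nn[OF x0]] eq cd by simp
    have zc: "card Z \<le> card (cen x0)" using cen_gt_Z[OF x0] by simp
    have cn: "card (cen x0) \<le> order G" using card_mono[OF finG cen_carrier] by (simp add: order_def)
    have zn: "card Z \<le> order G" using zc cn by simp
    have "int (order G) * (int (card (cen x0)) - int (card Z)) = int (card (cen x0)) * (int (order G) - int (card Z))"
      using arg_cong[OF e, of int] zc zn by (simp add: of_nat_diff)
    then have "card Z = 0 \<or> card (cen x0) = order G" by (simp add: algebra_simps)
    then have "card (cen x0) = order G" using cardZ_pos by auto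
    then have "cen x0 = carrier G" using card_subset_eq[OF finG cen_carrier] by (simp add: order_def)
    then show False using cen_proper[OF x0] by simp
  qed
  then obtain x1 where x1: "x1 \<in> carrier G" "x1 \<notin> Z" "x1 \<notin> U x0" using U_sub[OF x0(1)] by blast
  have dj: "U x0 \<inter> U x1 = {}" using U_disj[OF x0 x1] .
  have fd: "finite (carrier G - Z)" using finG by simp
  have f0: "finite (U x0)" using finite_subset[OF U_sub[OF x0(1)] fd] .
  have f1: "finite (U x1)" using finite_subset[OF U_sub[OF x1(1)] fd] .
  have "card (U x0 \<union> U x1) = card (U x0) + card (U x1)" using card_Un_disjoint[OF f0 f1 dj] .
  moreover have "card (U x0 \<union> U x1) \<le> card (carrier G - Z)"
    using card_mono[OF fd] U_sub[OF x0(1)] U_sub[OF x1(1)] by simp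
  ultimately have "card (U x0) + card (U x1) \<le> order G - card Z" using cd by simp
  moreover have "order G \<le> 2 * card (U x0)" using U_big[OF x0 nn[OF x0]] .
  moreover have "order G \<le> 2 * card (U x1)" using U_big[OF x1(1,2) nn[OF x1(1,2)]] .
  moreover have "0 < order G" using finG one_closed unfolding order_def by (auto simp: card_gt_0_iff)
  ultimately show False using cardZ_pos by linarith
qed

end


context mnc
begin

lemma sqf_sq: "r * r dvd order G \<Longrightarrow> Factorial_Ring.prime r \<Longrightarrow> False"
proof -
  assume "r * r dvd order G" "Factorial_Ring.prime r"
  then have "r ^ 2 dvd order G" by (simp add: power2_eq_square)
  then have "r dvd 1" using squarefreeD[OF sqfG] by blast
  then show False using \<open>Factorial_Ring.prime r\<close> by simp
qed

lemma sylow_p: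
  assumes H: "subgroup H G" and p: "Factorial_Ring.prime p" and d: "p dvd card H"
  shows "\<exists>S. subgroup S G \<and> S \<subseteq> H \<and> card S = p"
proof -
  interpret H0: group "G\<lparr>carrier := H\<rparr>" using subgroup_imp_group[OF H] .
  have o: "order (G\<lparr>carrier := H\<rparr>) = p ^ 1 * (card H div p)" using d by (simp add: order_def)
  have f: "finite (carrier (G\<lparr>carrier := H\<rparr>))" using sub_finite[OF finG H] by simp
  obtain S where S: "subgroup S (G\<lparr>carrier := H\<rparr>)" "card S = p ^ 1"
    using sylow_thm[OF p H0.is_group o f] by blast
  show ?thesis using subgroup_of_sub[OF H S(1)] S(2) by auto
qed

lemma abelian_false:
  assumes ab: "Z = carrier G"
  shows False
proof -
  have comm: "\<And>a b. a \<in> carrier G \<Longrightarrow> b \<in> carrier G \<Longrightarrow> a \<otimes> b = b \<otimes> a"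
    using ab unfolding Z_def by blast
  define m where "m = Max (ord ` carrier G)"
  have fin_ord: "finite (ord ` carrier G)" using finG by simp
  have "m \<in> ord ` carrier G" unfolding m_def using fin_ord one_closed by (intro Max_in) auto
  then obtain x where x: "x \<in> carrier G" "ord x = m" by blast
  have mdvd: "m dvd order G" using ord_dvd_group_order[OF x(1)] x(2) by simp
  have mn: "m \<noteq> order G" using ncycG x by blast
  have mpos: "0 < m" using ord_pos[OF finG x(1)] x(2) by simp
  obtain k where k: "order G = m * k" using mdvd by (rule dvdE)
  have k1: "k \<noteq> 1" using k mn by auto
  obtain r :: nat where r: "Factorial_Ring.prime r" "r dvd k" using prime_factor_nat[OF k1] by blast
  have rn: "r dvd order G" using r(2) k by simp
  have o: "order G = r ^ 1 * (order G div r)" using rn by simp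
  obtain R where R: "subgroup R G" "card R = r ^ 1" using sylow_thm[OF r(1) is_group o finG] by blast
  have "R \<noteq> {\<one>}"
  proof
    assume "R = {\<one>}" then have "card R = 1" by simp
    then show False using R(2) r(1) by simp
  qed
  then obtain y where y: "y \<in> R" "y \<noteq> \<one>" using one_in_sub[OF R(1)] by blast
  have yc: "y \<in> carrier G" using subgroup.mem_carrier[OF R(1) y(1)] .
  have oy: "ord y = r" using prime_sub_ord[OF R(1) _ y] R(2) r(1) by simp
  have "\<not> r dvd m"
  proof
    assume "r dvd m"
    then have "r * r dvd m * k" using r(2) by (rule mult_dvd_mono)
    then show False using sqf_sq k r(1) by simp
  qed
  then have "coprime r m" using prime_imp_coprime[OF r(1)] by simp
  then have cp: "coprime (ord x) (ord y)" using x(2) oy by (simp add: coprime_commute)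
  have "ord (x \<otimes> y) = m * r" using ord_mult_coprime[OF x(1) yc comm[OF x(1) yc] cp] x(2) oy by simp
  moreover have "ord (x \<otimes> y) \<le> m" unfolding m_def using fin_ord x(1) yc by (intro Max_ge) auto
  moreover have "2 \<le> r" using prime_ge_2_nat[OF r(1)] .
  ultimately have "m * 2 \<le> m * 1" using mult_le_mono2[of 2 r m] by simp
  then show False using mpos by simp
qed

end


locale mnc2 = mnc +
  fixes x0
  assumes x0c: "x0 \<in> carrier G" and x0Z: "x0 \<notin> Z" and Cn: "cen x0 \<lhd> G"
begin

abbreviation "C \<equiv> cen x0"

lemma Csub: "subgroup C G" using cen_sub[OF x0c] .
lemma Cprop: "C \<noteq> carrier G" using cen_proper[OF x0c x0Z] .
lemma finC: "finite C" using sub_finite[OF finG Csub] .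
lemma ZC: "Z \<subseteq> C" using Z_cen[OF x0c] .
lemma Cc: "C \<subseteq> carrier G" using cen_carrier .

lemma max_C: "subgroup K G \<Longrightarrow> C \<subseteq> K \<Longrightarrow> K \<noteq> C \<Longrightarrow> K = carrier G"
  using cen_max[OF x0c x0Z] by blast

lemma CD_inter:
  assumes w: "w \<in> carrier G" "w \<notin> C"
  shows "C \<inter> cen w = Z"
proof
  show "Z \<subseteq> C \<inter> cen w" using ZC Z_cen[OF w(1)] by blast
  show "C \<inter> cen w \<subseteq> Z"
  proof
    fix v assume v: "v \<in> C \<inter> cen w"
    show "v \<in> Z"
    proof (rule ccontr)
      assume vZ: "v \<notin> Z"
      have wZ: "w \<notin> Z" using w ZC by blast
      have "cen v = C" using cen_eq[OF x0c x0Z] v vZ by blast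
      moreover have "cen v = cen w" using cen_eq[OF w(1) wZ] v vZ by blast
      ultimately show False using x_in_cen[OF w(1)] w(2) by simp
    qed
  qed
qed

lemma CD_card:
  assumes w: "w \<in> carrier G" "w \<notin> C"
  shows "card (cen w) * card C = order G * card Z"
proof -
  have D: "subgroup (cen w) G" using cen_sub[OF w(1)] .
  have S: "subgroup (C <#> cen w) G" using normal_mult_sub[OF Cn D] .
  have "C \<subseteq> C <#> cen w" using set_mult_left[OF D Cc] .
  moreover have "w \<in> C <#> cen w" using set_mult_right[OF Csub cen_carrier] x_in_cen[OF w(1)] by blast
  ultimately have "C <#> cen w = carrier G" using max_C[OF S] w(2) by blast
  then have "order G * card (C \<inter> cen w) = card C * card (cen w)"
    using prod_card[OF finG Csub D] by (simp add: order_def)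
  then show ?thesis using CD_inter[OF w] by (simp add: mult.commute)
qed

lemma exists_w: "\<exists>w. w \<in> carrier G \<and> w \<notin> C"
  using Cprop Cc by blast

lemma q_prime: "Factorial_Ring.prime (order G div card C)" and nCq: "order G = card C * (order G div card C)"
proof -
  define q where "q = order G div card C"
  have cn: "card C dvd order G" using card_sub_dvd[OF finG Csub] .
  show nq: "order G = card C * (order G div card C)" using cn by simp
  have q1: "q \<noteq> 1"
  proof
    assume "q = 1"
    then have "card C = card (carrier G)" using nq q_def by (simp add: order_def)
    then have "C = carrier G" using card_subset_eq[OF finG Cc] by simp
    then show False using Cprop by simp
  qed
  obtain r :: nat where r: "Factorial_Ring.prime r" "r dvd q" using prime_factor_nat[OF q1] by blast
  have rn: "r dvd order G" using r(2) nq q_def by (metis dvd_mult)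
  have o: "order G = r ^ 1 * (order G div r)" using rn by simp
  obtain R where R: "subgroup R G" "card R = r ^ 1" using sylow_thm[OF r(1) is_group o finG] by blast
  have "\<not> R \<subseteq> C"
  proof
    assume "R \<subseteq> C"
    then have "r dvd card C" using card_sub_sub_dvd[OF Csub R(1)] R(2) by simp
    then have "r * r dvd card C * q" using r(2) by (rule mult_dvd_mono)
    then show False using sqf_sq r(1) nq q_def by simp
  qed
  then have ne: "C <#> R \<noteq> C" using set_mult_right[OF Csub subgroup.subset[OF R(1)]] by blast
  have S: "subgroup (C <#> R) G" using normal_mult_sub[OF Cn R(1)] .
  have "C <#> R = carrier G" using max_C[OF S set_mult_left[OF R(1) Cc] ne] .
  then have "order G \<le> card C * r"
    using card_set_mult_le[OF finC sub_finite[OF finG R(1)]] R(2) by (simp add: order_def)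
  then have "card C * q \<le> card C * r" using nq q_def by simp
  moreover have "0 < card C" using finC one_in_sub[OF Csub] by (auto simp: card_gt_0_iff)
  ultimately have "q \<le> r" by simp
  moreover have "0 < q"
  proof (rule ccontr)
    assume "\<not> 0 < q" then have "order G = 0" using nq q_def by simp
    moreover have "0 < order G" using finG one_closed unfolding order_def by (auto simp: card_gt_0_iff)
    ultimately show False by simp
  qed
  then have "r \<le> q" using r(2) by (simp add: dvd_imp_le)
  ultimately have "q = r" by simp
  then show "Factorial_Ring.prime (order G div card C)" using r(1) q_def by simp
qed

end


context mnc2
begin

lemma commC: "a \<in> C \<Longrightarrow> b \<in> C \<Longrightarrow> a \<otimes> b = b \<otimes> a"
  using cen_comm[OF x0c x0Z] by blast

lemma P_exists:
  assumes p: "Factorial_Ring.prime p" and d: "p dvd card C"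
  shows "\<exists>P. P \<lhd> G \<and> P \<subseteq> C \<and> card P = p"
proof -
  obtain S where S: "subgroup S G" "S \<subseteq> C" "card S = p" using sylow_p[OF Csub p d] by blast
  define P where "P = {v \<in> C. v [^] p = \<one>}"
  have PC: "P \<subseteq> C" unfolding P_def by blast
  have Pc: "\<And>v. v \<in> P \<Longrightarrow> v \<in> carrier G" using PC Cc by blast
  have Psub: "subgroup P G"
  proof (rule subgroupI)
    show "P \<subseteq> carrier G" using Pc by blast
    show "P \<noteq> {}" unfolding P_def using one_in_sub[OF Csub] by auto
    fix a b assume a: "a \<in> P" and b: "b \<in> P"
    have ac: "a \<in> carrier G" and bc: "b \<in> carrier G" using a b Pc by auto
    have "inv a \<in> C" using subgroup.m_inv_closed[OF Csub] a PC by blast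
    moreover have "(inv a) [^] p = \<one>" using nat_pow_inv[OF ac, of p] a P_def by simp
    ultimately show "inv a \<in> P" unfolding P_def by simp
    have "a \<otimes> b \<in> C" using subgroup.m_closed[OF Csub] a b PC by blast
    moreover have "(a \<otimes> b) [^] p = \<one>"
      using pow_mult_distrib[OF commC ac bc, of p] a b PC P_def by auto
    ultimately show "a \<otimes> b \<in> P" unfolding P_def by simp
  qed
  have Pn: "P \<lhd> G" unfolding normal_inv_iff
  proof (intro conjI ballI)
    show "subgroup P G" by (rule Psub)
    fix g h assume g: "g \<in> carrier G" and h: "h \<in> P"
    have hc: "h \<in> carrier G" using Pc h by simp
    have "g \<otimes> h \<otimes> inv g \<in> C" using Cn g h PC unfolding normal_inv_iff by blast
    moreover have "(g \<otimes> h \<otimes> inv g) [^] p = \<one>"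
    proof -
      have "(g \<otimes> h \<otimes> inv g) [^] p = cj G g (h [^] p)" using cj_pow[OF g hc] by (simp add: cj_def)
      also have "\<dots> = cj G g \<one>" using h P_def by simp
      also have "\<dots> = \<one>" using g by (simp add: cj_def)
      finally show ?thesis .
    qed
    ultimately show "g \<otimes> h \<otimes> inv g \<in> P" unfolding P_def by simp
  qed
  have SP: "S \<subseteq> P"
  proof
    fix v assume v: "v \<in> S"
    have "v [^] card S = \<one>" using pow_ord_sub[OF S(1) v] .
    then show "v \<in> P" using v S P_def by auto
  qed
  have finP: "finite P" using sub_finite[OF finG Psub] .
  have "P \<noteq> carrier G" using PC Cprop Cc by blast
  then obtain v where v: "v \<in> P" "ord v = card P" using propG[OF Psub] by blast
  have vc: "v \<in> carrier G" using Pc v by simp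
  have "v [^] p = \<one>" using v P_def by simp
  then have "ord v dvd p" using pow_eq_id[OF vc] by simp
  then have "card P \<le> p" using v(2) prime_gt_0_nat[OF p] by (simp add: dvd_imp_le)
  moreover have "p \<le> card P" using card_mono[OF finP SP] S(3) by simp
  ultimately have "card P = p" by simp
  then show ?thesis using Pn PC by blast
qed

lemma card_D:
  assumes w: "w \<in> carrier G" "w \<notin> C"
  shows "card (cen w) = (order G div card C) * card Z"
proof -
  have cpos: "0 < card C" using finC one_in_sub[OF Csub] by (auto simp: card_gt_0_iff)
  have "card (cen w) * card C = card C * (order G div card C) * card Z" using CD_card[OF w] nCq by simp
  then have "card C * card (cen w) = card C * ((order G div card C) * card Z)" by (simp add: algebra_simps)
  then show ?thesis using cpos by simp
qed

lemma z_one: "card Z = 1"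
proof (rule ccontr)
  assume z1: "card Z \<noteq> 1"
  define q where "q = order G div card C"
  have qp: "Factorial_Ring.prime q" using q_prime q_def by simp
  have nq: "order G = card C * q" using nCq q_def by simp
  have "card Z dvd card C" using card_sub_sub_dvd[OF Csub Z_sub ZC] .
  then obtain a where a: "card C = card Z * a" by (rule dvdE)
  have zc: "2 * card Z \<le> card C" using cen_gt_Z[OF x0c x0Z] .
  have a1: "a \<noteq> 1" using a zc cardZ_pos by auto
  obtain p :: nat where p: "Factorial_Ring.prime p" "p dvd a" using prime_factor_nat[OF a1] by blast
  have pc: "p dvd card C" using p(2) a by simp
  obtain P where P: "P \<lhd> G" "P \<subseteq> C" "card P = p" using P_exists[OF p(1) pc] by blast
  have Psub: "subgroup P G" using normal_imp_subgroup[OF P(1)] .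
  obtain w where w: "w \<in> carrier G" "w \<notin> C" using exists_w by blast
  have wZ: "w \<notin> Z" using w ZC by blast
  have cD: "card (cen w) = q * card Z" using card_D[OF w] q_def by simp
  have "q dvd card (cen w)" using cD by simp
  then obtain Q where Q: "subgroup Q G" "Q \<subseteq> cen w" "card Q = q" using sylow_p[OF cen_sub[OF w(1)] qp] by blast
  have PQ: "subgroup (P <#> Q) G" using normal_mult_sub[OF P(1) Q(1)] .
  have z2: "2 \<le> card Z" using z1 cardZ_pos by simp
  have apos: "0 < a" using a zc cardZ_pos by (cases "a = 0") auto
  have pa: "p \<le> a" using p(2) apos by (simp add: dvd_imp_le)
  have "card (P <#> Q) \<le> p * q"
    using card_set_mult_le[OF sub_finite[OF finG Psub] sub_finite[OF finG Q(1)]] P(3) Q(3) by simp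
  moreover have "p * q < order G"
  proof -
    have q0: "0 < q" using prime_gt_0_nat[OF qp] .
    have p0: "0 < p" using prime_gt_0_nat[OF p(1)] .
    have "p * q < 2 * (p * q)" using q0 p0 by simp
    also have "\<dots> \<le> card Z * (a * q)" using z2 pa by (intro mult_le_mono mult_le_mono1) simp_all
    also have "\<dots> = order G" using nq a by (simp add: algebra_simps)
    finally show ?thesis .
  qed
  ultimately have PQne: "P <#> Q \<noteq> carrier G" by (auto simp: order_def)
  have "P \<noteq> {\<one>}"
  proof
    assume "P = {\<one>}" then have "card P = 1" by simp
    then show False using P(3) p(1) by simp
  qed
  then obtain u where u: "u \<in> P" "u \<noteq> \<one>" using one_in_sub[OF Psub] by blast
  have uc: "u \<in> carrier G" using subgroup.mem_carrier[OF Psub u(1)] .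
  have ou: "ord u = p" using prime_sub_ord[OF Psub _ u] P(3) p(1) by simp
  have uZ: "u \<notin> Z"
  proof
    assume "u \<in> Z"
    then have "p dvd card Z" using ord_dvd_sub[OF Z_sub] ou by metis
    then have "p * p dvd card Z * a" using p(2) by (rule mult_dvd_mono)
    then have "p * p dvd order G" using nq a by (metis dvd_mult2)
    then show False using sqf_sq p(1) by blast
  qed
  have cu: "cen u = C" using cen_eq[OF x0c x0Z] u(1) P(2) uZ by blast
  have "Q \<subseteq> cen u"
  proof
    fix t assume t: "t \<in> Q"
    have tc: "t \<in> carrier G" using subgroup.mem_carrier[OF Q(1) t] .
    have "t \<in> P <#> Q" using set_mult_right[OF Psub subgroup.subset[OF Q(1)]] t by blast
    moreover have "u \<in> P <#> Q" using set_mult_left[OF Q(1) subgroup.subset[OF Psub]] u(1) by blast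
    ultimately have "t \<otimes> u = u \<otimes> t" using propcomm[OF PQ PQne] by blast
    then show "t \<in> cen u" unfolding cen_def using tc by simp
  qed
  then have "Q \<subseteq> C \<inter> cen w" using cu Q(2) by blast
  then have "Q \<subseteq> Z" using CD_inter[OF w] by simp
  then have "q dvd card Z" using card_sub_sub_dvd[OF Z_sub Q(1)] Q(3) by simp
  then have "q * q dvd card Z * (a * q)" by (simp add: mult_dvd_mono)
  then have "q * q dvd order G" using nq a by (simp add: algebra_simps)
  then show False using sqf_sq qp by blast
qed

end


context mnc2
begin

lemma c_prime: "Factorial_Ring.prime (card C)"
proof -
  define q where "q = order G div card C"
  have qp: "Factorial_Ring.prime q" using q_prime q_def by simp
  have nq: "order G = card C * q" using nCq q_def by simp
  have c2: "2 \<le> card C" using cen_gt_Z[OF x0c x0Z] z_one by simp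
  then have c1: "card C \<noteq> 1" by simp
  obtain p :: nat where p: "Factorial_Ring.prime p" "p dvd card C" using prime_factor_nat[OF c1] by blast
  have "p = card C"
  proof (rule ccontr)
    assume ne: "p \<noteq> card C"
    have "p \<le> card C" using p(2) c2 by (simp add: dvd_imp_le)
    then have pc: "p < card C" using ne by simp
    obtain P where P: "P \<lhd> G" "P \<subseteq> C" "card P = p" using P_exists[OF p] by blast
    have Psub: "subgroup P G" using normal_imp_subgroup[OF P(1)] .
    obtain w where w: "w \<in> carrier G" "w \<notin> C" using exists_w by blast
    have wZ: "w \<notin> Z" using w ZC by blast
    have cD: "card (cen w) = q" using card_D[OF w] q_def z_one by simp
    have D: "subgroup (cen w) G" using cen_sub[OF w(1)] .
    have PD: "subgroup (P <#> cen w) G" using normal_mult_sub[OF P(1) D] .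
    have "card (P <#> cen w) \<le> p * q"
      using card_set_mult_le[OF sub_finite[OF finG Psub] sub_finite[OF finG D]] P(3) cD by simp
    moreover have "p * q < card C * q" using pc prime_gt_0_nat[OF qp] by simp
    ultimately have "P <#> cen w \<noteq> carrier G" using nq by (auto simp: order_def)
    moreover have "cen w \<subseteq> P <#> cen w" using set_mult_right[OF Psub cen_carrier] .
    ultimately have "P <#> cen w = cen w" using cen_max[OF w(1) wZ PD] by blast
    then have "P \<subseteq> cen w" using set_mult_left[OF D subgroup.subset[OF Psub]] by simp
    then have "P \<subseteq> Z" using CD_inter[OF w] P(2) by blast
    then have "card P \<le> card Z" using card_mono[OF finZ] by blast
    then show False using P(3) z_one prime_ge_2_nat[OF p(1)] by simp
  qed
  then show ?thesis using p(1) by simp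
qed

lemma final_false: False
proof -
  define q where "q = order G div card C"
  define p where "p = card C"
  have qp: "Factorial_Ring.prime q" using q_prime q_def by simp
  have pp: "Factorial_Ring.prime p" using c_prime p_def by simp
  have nq: "order G = p * q" using nCq q_def p_def by simp
  have p2: "2 \<le> p" using prime_ge_2_nat[OF pp] .
  have q2: "2 \<le> q" using prime_ge_2_nat[OF qp] .
  have ordw: "\<And>w. w \<in> carrier G - C \<Longrightarrow> ord w = q"
  proof -
    fix w assume w: "w \<in> carrier G - C"
    have cD: "card (cen w) = q" using card_D[of w] w q_def z_one by simp
    have wc: "w \<in> carrier G" using w by simp
    have "w \<noteq> \<one>" using w one_in_sub[OF Csub] by blast
    moreover have "Factorial_Ring.prime (card (cen w))" using cD qp by simp
    ultimately show "ord w = q" using prime_sub_ord[OF cen_sub[OF wc] _ x_in_cen[OF wc]] cD by simp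
  qed
  have sC: "(\<Sum>x\<in>C. ord x) = 1 + (p - 1) * p" using psi_prime_sub[OF Csub] pp p_def by simp
  have "(\<Sum>x\<in>carrier G - C. ord x) = (\<Sum>x\<in>carrier G - C. q)" using ordw by simp
  also have "\<dots> = card (carrier G - C) * q" by simp
  also have "card (carrier G - C) = p * q - p"
    using card_Diff_subset[OF finC Cc] nq p_def by (simp add: order_def)
  finally have sR: "(\<Sum>x\<in>carrier G - C. ord x) = (p * q - p) * q" .
  have "(\<Sum>x\<in>carrier G. ord x) = (\<Sum>x\<in>C. ord x) + (\<Sum>x\<in>carrier G - C. ord x)"
    using sum.subset_diff[OF Cc finG] by (simp add: add.commute)
  then have tot: "(\<Sum>x\<in>carrier G. ord x) = 1 + (p - 1) * p + (p * q - p) * q" using sC sR by simp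
  have d1: "(1 + (p - 1) * p) dvd (1 + (p - 1) * p + (p * q - p) * q)"
    using DIVG[OF Csub] sC tot by simp
  obtain w where w: "w \<in> carrier G" "w \<notin> C" using exists_w by blast
  have cD: "card (cen w) = q" using card_D[OF w] q_def z_one by simp
  have "(\<Sum>x\<in>cen w. ord x) = 1 + (q - 1) * q" using psi_prime_sub[OF cen_sub[OF w(1)]] cD qp by simp
  then have d2: "(1 + (q - 1) * q) dvd (1 + (p - 1) * p + (p * q - p) * q)"
    using DIVG[OF cen_sub[OF w(1)]] tot by simp
  show False using nt3[OF p2 q2 d1 d2] .
qed

end

context mnc
begin

lemma mnc_false: False
proof (cases "Z = carrier G")
  case True then show False using abelian_false by simp
next
  case False
  obtain x0 where x0: "x0 \<in> carrier G" "x0 \<notin> Z" "cen x0 \<lhd> G" using exists_normal[OF False] by blast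
  have "mnc2 G x0" using mnc2.intro[OF mnc_axioms mnc2_axioms.intro[OF x0]] .
  then show False by (rule mnc2.final_false)
qed

end


context group
begin

lemma dir1:
  assumes fin: "finite (carrier G)"
    and hyp: "\<forall>H. subgroup H G \<longrightarrow> psi_divisible (G\<lparr>carrier := H\<rparr>)"
  shows "cyclic_group G \<and> squarefree (order G)"
proof -
  have DIV: "\<And>H K. subgroup H G \<Longrightarrow> subgroup K G \<Longrightarrow> K \<subseteq> H \<Longrightarrow> (\<Sum>x\<in>K. ord x) dvd (\<Sum>x\<in>H. ord x)"
    using div_all[OF hyp] by blast
  have sqf: "squarefree (order G)" using sqf_step[OF fin DIV] .
  have "cyclic_group G"
  proof (rule ccontr)
    assume nc: "\<not> cyclic_group G"
    define NC where "NC = {H. subgroup H G \<and> \<not> (\<exists>g\<in>H. ord g = card H)}"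
    have "carrier G \<in> NC" using nc cyclic_iff_gen[OF fin] subgroup_self unfolding NC_def by (simp add: order_def)
    then have ex: "\<exists>n. \<exists>H\<in>NC. card H = n" by blast
    obtain n where n: "\<exists>H\<in>NC. card H = n" and nmin: "\<And>m. m < n \<Longrightarrow> \<not> (\<exists>H\<in>NC. card H = m)"
      using exists_least_iff[THEN iffD1, OF ex] by blast
    obtain H where H: "H \<in> NC" "card H = n" using n by blast
    have Hs: "subgroup H G" using H NC_def by simp
    have finH: "finite H" using sub_finite[OF fin Hs] .
    define H0 where "H0 = G\<lparr>carrier := H\<rparr>"
    have gH0: "group H0" unfolding H0_def using subgroup_imp_group[OF Hs] .
    have ordH: "\<And>x. group.ord H0 x = ord x" unfolding H0_def using ord_sub[OF Hs] .
    have "mnc H0"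
    proof (rule mnc.intro[OF gH0], rule mnc_axioms.intro)
      show "finite (carrier H0)" using finH H0_def by simp
      show "squarefree (order H0)"
        using squarefree_mono[OF card_sub_dvd[OF fin Hs] sqf] H0_def by (simp add: order_def)
      show "\<forall>g\<in>carrier H0. group.ord H0 g \<noteq> order H0"
        using H NC_def H0_def ordH by (simp add: order_def)
    next
      fix K assume K: "subgroup K H0" "K \<noteq> carrier H0"
      have KG: "subgroup K G" and KH: "K \<subseteq> H" using subgroup_of_sub[OF Hs] K(1) H0_def by auto
      have "K \<subset> H" using KH K(2) H0_def by auto
      then have "card K < n" using psubset_card_mono[OF finH] H(2) by simp
      then have "K \<notin> NC" using nmin by blast
      then show "\<exists>g\<in>K. group.ord H0 g = card K" using KG NC_def ordH by simp
    next
      fix K assume K: "subgroup K H0"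
      have KG: "subgroup K G" and KH: "K \<subseteq> H" using subgroup_of_sub[OF Hs] K H0_def by auto
      show "(\<Sum>x\<in>K. group.ord H0 x) dvd (\<Sum>x\<in>carrier H0. group.ord H0 x)"
        using DIV[OF Hs KG KH] ordH H0_def by simp
    qed
    then show False by (rule mnc.mnc_false)
  qed
  then show ?thesis using sqf by simp
qed

end

theorem theorem2p2:
  fixes G :: "('a, 'b) monoid_scheme"
  assumes "group G" and "finite (carrier G)"
  shows "(\<forall>H. subgroup H G \<longrightarrow> psi_divisible (G\<lparr>carrier := H\<rparr>))
         \<longleftrightarrow> (cyclic_group G \<and> squarefree (order G))"
  using group.dir1[OF assms] group.dir2[OF assms] by blast

end
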